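(* Let $X$ be a 2-complex and $N$ a positive integer such that every face (2-cell) of $X$ has at most $N$ edges. Suppose there is $\kappa>1/N$ such that $X$ satisfies a linear isoperimetric inequality for large-area loops: every edge loop $\gamma$ in $X$ of length $n$ whose area is at least $18\kappa^2N^2$ can be filled with at most $\kappa n$ cells. Then every geodesic triangle in the one-skeleton of $X$ is $\delta$-thin for $\delta=120\kappa^2N^3$.
   Context: The area of an edge loop is the minimal number of 2-cells in a combinatorial (van Kampen) filling of the loop in $X$. A geodesic triangle in a graph is $\delta$-thin if each side is contained in the $\delta$-neighbourhood of the union of the other two sides. *)

theory Defs
  imports Complex_Main "HOL-Library.Extended_Real"
begin

text \<open>A combinatorial 2-complex: vertices, edges (with possibly equal endpoints,
  multiple edges allowed), and faces (2-cells) attached along closed edge paths.\<close>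

record ('v,'e,'f) cx =
  verts :: "'v set"
  edges :: "'e set"
  ends  :: "'e \<Rightarrow> 'v \<times> 'v"
  faces :: "'f set"
  bdry  :: "'f \<Rightarrow> ('e \<times> bool) list"

text \<open>Oriented edges (darts): (e, True) runs from fst (ends e) to snd (ends e).\<close>

definition dsrc :: "('v,'e,'f) cx \<Rightarrow> 'e \<times> bool \<Rightarrow> 'v" where
  "dsrc X d = (if snd d then fst (ends X (fst d)) else snd (ends X (fst d)))"

definition dtgt :: "('v,'e,'f) cx \<Rightarrow> 'e \<times> bool \<Rightarrow> 'v" where
  "dtgt X d = (if snd d then snd (ends X (fst d)) else fst (ends X (fst d)))"

definition dinv :: "'e \<times> bool \<Rightarrow> 'e \<times> bool" where
  "dinv d = (fst d, \<not> snd d)"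

definition is_path :: "('v,'e,'f) cx \<Rightarrow> ('e \<times> bool) list \<Rightarrow> bool" where
  "is_path X p \<longleftrightarrow> fst ` set p \<subseteq> edges X \<and>
     (\<forall>i. Suc i < length p \<longrightarrow> dtgt X (p ! i) = dsrc X (p ! Suc i))"

definition path_from :: "('v,'e,'f) cx \<Rightarrow> 'v \<Rightarrow> 'v \<Rightarrow> ('e \<times> bool) list \<Rightarrow> bool" where
  "path_from X u v p \<longleftrightarrow> u \<in> verts X \<and> is_path X p \<and>
     (p = [] \<longrightarrow> u = v) \<and> (p \<noteq> [] \<longrightarrow> dsrc X (hd p) = u \<and> dtgt X (last p) = v)"

definition is_loop :: "('v,'e,'f) cx \<Rightarrow> ('e \<times> bool) list \<Rightarrow> bool" where
  "is_loop X p \<longleftrightarrow> is_path X p \<and> (p \<noteq> [] \<longrightarrow> dsrc X (hd p) = dtgt X (last p))"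

definition two_complex :: "('v,'e,'f) cx \<Rightarrow> bool" where
  "two_complex X \<longleftrightarrow> (\<forall>e\<in>edges X. fst (ends X e) \<in> verts X \<and> snd (ends X e) \<in> verts X)
     \<and> (\<forall>f\<in>faces X. is_loop X (bdry X f))"

definition face_loops :: "('v,'e,'f) cx \<Rightarrow> ('e \<times> bool) list set" where
  "face_loops X = {rotate k (bdry X f) | k f. f \<in> faces X}
                \<union> {rotate k (rev (map dinv (bdry X f))) | k f. f \<in> faces X}"

text \<open>fills X k p: the edge path p can be transformed into the empty path by
  inserting/deleting backtracks (free) and inserting k face-boundary loops
  (combinatorial null-homotopy; by van Kampen's lemma this is equivalent to the
  existence of a van Kampen diagram with k 2-cells).\<close>

inductive fills :: "('v,'e,'f) cx \<Rightarrow> nat \<Rightarrow> ('e \<times> bool) list \<Rightarrow> bool" for X where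
  fills_nil: "fills X 0 []"
| fills_del: "fills X k (u @ w) \<Longrightarrow> fills X k (u @ [d, dinv d] @ w)"
| fills_ins: "is_path X (u @ [d, dinv d] @ w) \<Longrightarrow> fills X k (u @ [d, dinv d] @ w)
               \<Longrightarrow> fills X k (u @ w)"
| fills_face: "c \<in> face_loops X \<Longrightarrow> is_path X (u @ c @ w) \<Longrightarrow> fills X k (u @ c @ w)
               \<Longrightarrow> fills X (Suc k) (u @ w)"

definition area :: "('v,'e,'f) cx \<Rightarrow> ('e \<times> bool) list \<Rightarrow> ereal" where
  "area X \<gamma> = Inf {ereal (real k) | k. fills X k \<gamma>}"

definition gdist :: "('v,'e,'f) cx \<Rightarrow> 'v \<Rightarrow> 'v \<Rightarrow> ereal" where
  "gdist X u v = Inf {ereal (real (length p)) | p. path_from X u v p}"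

definition geodesic :: "('v,'e,'f) cx \<Rightarrow> 'v \<Rightarrow> 'v \<Rightarrow> ('e \<times> bool) list \<Rightarrow> bool" where
  "geodesic X u v p \<longleftrightarrow> path_from X u v p \<and> ereal (real (length p)) = gdist X u v"

text \<open>Points of the one-skeleton as a metric graph (edges of length 1):
  vertices, and interior points of edges at parameter t measured from fst (ends e).\<close>

datatype ('v,'e) pt = Vx 'v | Ip 'e real

definition anchors :: "('v,'e,'f) cx \<Rightarrow> ('v,'e) pt \<Rightarrow> ('v \<times> real) set" where
  "anchors X x = (case x of Vx v \<Rightarrow> {(v, 0)}
                   | Ip e t \<Rightarrow> {(fst (ends X e), t), (snd (ends X e), 1 - t)})"

definition pdist :: "('v,'e,'f) cx \<Rightarrow> ('v,'e) pt \<Rightarrow> ('v,'e) pt \<Rightarrow> ereal" where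
  "pdist X x y = min
     (case (x, y) of (Ip e s, Ip e' t) \<Rightarrow> (if e = e' then ereal \<bar>s - t\<bar> else \<infinity>) | _ \<Rightarrow> \<infinity>)
     (Inf {ereal o1 + gdist X a b + ereal o2 | a o1 b o2.
             (a, o1) \<in> anchors X x \<and> (b, o2) \<in> anchors X y})"

definition path_pts :: "('v,'e,'f) cx \<Rightarrow> 'v \<Rightarrow> ('e \<times> bool) list \<Rightarrow> ('v,'e) pt set" where
  "path_pts X u p = {Vx u} \<union> {Vx (dsrc X d) | d. d \<in> set p} \<union> {Vx (dtgt X d) | d. d \<in> set p}
                    \<union> {Ip (fst d) t | d t. d \<in> set p \<and> 0 < t \<and> t < 1}"

definition geodesic_triangle ::
  "('v,'e,'f) cx \<Rightarrow> 'v \<Rightarrow> 'v \<Rightarrow> 'v \<Rightarrow> ('e \<times> bool) list \<Rightarrow> ('e \<times> bool) list \<Rightarrow> ('e \<times> bool) list \<Rightarrow> bool" where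
  "geodesic_triangle X a b c pab pbc pca \<longleftrightarrow>
     geodesic X a b pab \<and> geodesic X b c pbc \<and> geodesic X c a pca"

definition thin_triangle ::
  "('v,'e,'f) cx \<Rightarrow> real \<Rightarrow> 'v \<Rightarrow> 'v \<Rightarrow> 'v \<Rightarrow> ('e \<times> bool) list \<Rightarrow> ('e \<times> bool) list \<Rightarrow> ('e \<times> bool) list \<Rightarrow> bool" where
  "thin_triangle X \<delta> a b c pab pbc pca \<longleftrightarrow>
     (\<forall>x\<in>path_pts X a pab. \<exists>y\<in>path_pts X b pbc \<union> path_pts X c pca. pdist X x y \<le> ereal \<delta>) \<and>
     (\<forall>x\<in>path_pts X b pbc. \<exists>y\<in>path_pts X c pca \<union> path_pts X a pab. pdist X x y \<le> ereal \<delta>) \<and>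
     (\<forall>x\<in>path_pts X c pca. \<exists>y\<in>path_pts X a pab \<union> path_pts X b pbc. pdist X x y \<le> ereal \<delta>)"

end

theory Submission
  imports Defs
begin

definition conn :: "('v,'e,'f) cx \<Rightarrow> 'v \<Rightarrow> 'v \<Rightarrow> bool" where
  "conn X u v \<longleftrightarrow> (\<exists>p. path_from X u v p)"

definition dn :: "('v,'e,'f) cx \<Rightarrow> 'v \<Rightarrow> 'v \<Rightarrow> nat" where
  "dn X u v = (LEAST n. \<exists>p. path_from X u v p \<and> length p = n)"

definition pv :: "('v,'e,'f) cx \<Rightarrow> 'v \<Rightarrow> ('e \<times> bool) list \<Rightarrow> nat \<Rightarrow> 'v" where
  "pv X u p i = (if i = 0 then u else dtgt X (p ! (i - 1)))"

definition revp :: "('e \<times> bool) list \<Rightarrow> ('e \<times> bool) list" where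
  "revp p = rev (map dinv p)"

lemma dsrc_dinv[simp]: "dsrc X (dinv d) = dtgt X d"
  by (cases d) (simp add: dsrc_def dtgt_def dinv_def)
lemma dtgt_dinv[simp]: "dtgt X (dinv d) = dsrc X d"
  by (cases d) (simp add: dsrc_def dtgt_def dinv_def)

lemma fst_dinv[simp]: "fst (dinv d) = fst d" by (simp add: dinv_def)

lemma pv0[simp]: "pv X u p 0 = u" by (simp add: pv_def)
lemma pvSuc: "pv X u p (Suc i) = dtgt X (p ! i)" by (simp add: pv_def)

lemma pf_src0: "path_from X u v p \<Longrightarrow> i<length p \<Longrightarrow> dsrc X (p ! i) = pv X u p i"
proof (cases i)
  case 0 
  assume "path_from X u v p" "i<length p"
  with 0 show ?thesis by (auto simp: path_from_def hd_conv_nth pv_def)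
next
  case (Suc j) 
  assume "path_from X u v p" "i<length p"
  with Suc show ?thesis by (auto simp: path_from_def is_path_def pv_def)
qed
lemma pf_end0: "path_from X u v p \<Longrightarrow> pv X u p (length p) = v"
  by (cases "p = []") (auto simp: path_from_def pv_def last_conv_nth)
lemma pf_intro: "u \<in> verts X \<Longrightarrow> fst ` set p \<subseteq> edges X \<Longrightarrow>
     (\<forall>i<length p. dsrc X (p ! i) = pv X u p i) \<Longrightarrow> pv X u p (length p) = v \<Longrightarrow> path_from X u v p"
  unfolding path_from_def is_path_def
  apply (intro conjI allI impI)
  apply simp_all
  apply (auto simp: pv_def hd_conv_nth last_conv_nth)
  done

lemma path_from_iff:
  "path_from X u v p \<longleftrightarrow> u \<in> verts X \<and> fst ` set p \<subseteq> edges X \<and>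
     (\<forall>i<length p. dsrc X (p ! i) = pv X u p i) \<and> pv X u p (length p) = v"
  using pf_src0[of X u v p] pf_end0[of X u v p] pf_intro[of u X p v]
  by (auto simp: path_from_def is_path_def)

lemma pf_start: "path_from X u v p \<Longrightarrow> u \<in> verts X" by (simp add: path_from_def)
lemma pf_edges: "path_from X u v p \<Longrightarrow> fst ` set p \<subseteq> edges X" by (simp add: path_from_def is_path_def)

lemma pv_take: "k \<le> i \<Longrightarrow> i \<le> length p \<Longrightarrow> pv X u (take i p) k = pv X u p k"
  by (auto simp: pv_def)

lemma pv_drop: "i + k \<le> length p \<Longrightarrow> pv X (pv X u p i) (drop i p) k = pv X u p (i + k)"
  by (cases k) (auto simp: pv_def)

lemma pv_append1: "k \<le> length p \<Longrightarrow> pv X u (p @ q) k = pv X u p k"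
  by (auto simp: pv_def nth_append)

lemma pv_append2: "pv X u (p @ q) (length p + k) = pv X (pv X u p (length p)) q k"
  by (cases k) (auto simp: pv_def nth_append)

lemma path_from_pv_end: "path_from X u v p \<Longrightarrow> pv X u p (length p) = v"
  by (simp add: path_from_iff)

lemma path_from_src: "path_from X u v p \<Longrightarrow> i < length p \<Longrightarrow> dsrc X (p ! i) = pv X u p i"
  by (simp add: path_from_iff)

lemma path_from_tgt: "path_from X u v p \<Longrightarrow> i < length p \<Longrightarrow> dtgt X (p ! i) = pv X u p (Suc i)"
  by (simp add: pv_def)

lemma path_from_take: "path_from X u v p \<Longrightarrow> i \<le> length p \<Longrightarrow> path_from X u (pv X u p i) (take i p)"
  unfolding path_from_iff
  by (auto simp: pv_take dest: in_set_takeD)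

lemma path_from_append: "path_from X u v p \<Longrightarrow> path_from X v w q \<Longrightarrow> path_from X u w (p @ q)"
proof -
  assume H1: "path_from X u v p" and H2: "path_from X v w q"
  have e: "pv X u p (length p) = v" using H1 by (simp add: path_from_iff)
  show ?thesis unfolding path_from_iff
  proof (intro conjI allI impI)
    show "u \<in> verts X" using H1 by (simp add: path_from_iff)
    show "fst ` set (p @ q) \<subseteq> edges X" using H1 H2 by (auto simp: path_from_iff)
    fix i assume i: "i < length (p @ q)"
    show "dsrc X ((p @ q) ! i) = pv X u (p @ q) i"
    proof (cases "i < length p")
      case True then show ?thesis using H1 by (simp add: nth_append pv_append1 path_from_iff)
    next
      case False
      then obtain k where k: "i = length p + k" by (metis le_Suc_ex not_less)
      then show ?thesis using H2 i e by (simp add: nth_append pv_append2 path_from_iff)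
    qed
  next
    show "pv X u (p @ q) (length (p @ q)) = w"
      using pv_append2[of X u p q "length q"] e H2 by (simp add: path_from_iff)
  qed
qed

locale tc =
  fixes X :: "('v,'e,'f) cx"
  assumes tcx: "two_complex X"
begin

lemma edge_verts: "e \<in> edges X \<Longrightarrow> fst (ends X e) \<in> verts X \<and> snd (ends X e) \<in> verts X"
  using tcx by (auto simp: two_complex_def)

lemma dtgt_verts: "fst d \<in> edges X \<Longrightarrow> dtgt X d \<in> verts X"
  using edge_verts[of "fst d"] by (auto simp: dtgt_def)
lemma dsrc_verts: "fst d \<in> edges X \<Longrightarrow> dsrc X d \<in> verts X"
  using edge_verts[of "fst d"] by (auto simp: dsrc_def)

lemma pv_verts: assumes H: "path_from X u v p" shows "i \<le> length p \<Longrightarrow> pv X u p i \<in> verts X"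
proof (cases i)
  case 0 then show ?thesis using pf_start[OF H] by simp
next
  case (Suc j) assume "i \<le> length p"
  then have "fst (p ! j) \<in> edges X" using pf_edges[OF H] Suc by (auto simp: nth_mem)
  then show ?thesis using Suc by (simp add: pvSuc dtgt_verts)
qed

lemma end_verts: "path_from X u v p \<Longrightarrow> v \<in> verts X"
  using pv_verts[of u v p "length p"] path_from_pv_end[of X u v p] by simp

lemma path_from_drop: "path_from X u v p \<Longrightarrow> i \<le> length p \<Longrightarrow> path_from X (pv X u p i) v (drop i p)"
proof -
  assume H: "path_from X u v p" and i: "i \<le> length p"
  show ?thesis unfolding path_from_iff
  proof (intro conjI allI impI)
    show "pv X u p i \<in> verts X" using pv_verts[OF H i] .
    show "fst ` set (drop i p) \<subseteq> edges X" using pf_edges[OF H] set_drop_subset[of i p] by blast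
    fix k assume k: "k < length (drop i p)"
    have "dsrc X (drop i p ! k) = dsrc X (p ! (i + k))" using k i by simp
    also have "\<dots> = pv X u p (i + k)" using path_from_src[OF H, of "i+k"] k by simp
    also have "\<dots> = pv X (pv X u p i) (drop i p) k" using pv_drop[of i k p X u] k by simp
    finally show "dsrc X (drop i p ! k) = pv X (pv X u p i) (drop i p) k" .
  next
    have "pv X (pv X u p i) (drop i p) (length (drop i p)) = pv X u p (i + (length p - i))"
      using pv_drop[of i "length p - i" p X u] i by simp
    also have "\<dots> = v" using i path_from_pv_end[OF H] by simp
    finally show "pv X (pv X u p i) (drop i p) (length (drop i p)) = v" .
  qed
qed

lemma pv_revp: "path_from X u v p \<Longrightarrow> k \<le> length p \<Longrightarrow> pv X v (revp p) k = pv X u p (length p - k)"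
proof (cases k)
  case 0 assume H: "path_from X u v p"
  then show ?thesis using 0 path_from_pv_end[OF H] by simp
next
  case (Suc j)
  assume H: "path_from X u v p" "k \<le> length p"
  then have "revp p ! j = dinv (p ! (length p - Suc j))" using Suc
    by (simp add: revp_def rev_nth)
  then have "pv X v (revp p) k = dsrc X (p ! (length p - Suc j))" using Suc by (simp add: pv_def)
  also have "\<dots> = pv X u p (length p - Suc j)" using path_from_src[OF H(1)] H(2) Suc by simp
  finally show ?thesis using Suc by simp
qed

lemma length_revp[simp]: "length (revp p) = length p" by (simp add: revp_def)
lemma set_revp: "fst ` set (revp p) = fst ` set p" by (simp add: revp_def image_image)

lemma path_from_revp: "path_from X u v p \<Longrightarrow> path_from X v u (revp p)"
proof -
  assume H: "path_from X u v p"
  have A: "\<forall>k<length (revp p). dsrc X (revp p ! k) = pv X v (revp p) k"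
  proof (intro allI impI)
    fix k assume k: "k < length (revp p)"
    then have k': "k < length p" by simp
    have "revp p ! k = dinv (p ! (length p - Suc k))" using k' by (simp add: revp_def rev_nth)
    then have "dsrc X (revp p ! k) = dtgt X (p ! (length p - Suc k))" by simp
    also have "\<dots> = pv X u p (Suc (length p - Suc k))" by (simp add: pvSuc)
    also have "Suc (length p - Suc k) = length p - k" using k' by simp
    also have "pv X u p (length p - k) = pv X v (revp p) k" using pv_revp[OF H, of k] k' by simp
    finally show "dsrc X (revp p ! k) = pv X v (revp p) k" .
  qed
  have B: "pv X v (revp p) (length (revp p)) = u" using pv_revp[OF H, of "length p"] by simp
  have C: "fst ` set (revp p) \<subseteq> edges X" unfolding set_revp using pf_edges[OF H] .
  from pf_intro[OF end_verts[OF H] C A B] show ?thesis .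
qed

end


definition geo :: "('v,'e,'f) cx \<Rightarrow> 'v \<Rightarrow> 'v \<Rightarrow> ('e \<times> bool) list \<Rightarrow> bool" where
  "geo X u v p \<longleftrightarrow> path_from X u v p \<and> length p = dn X u v"

context tc begin

lemma path_nil: "u \<in> verts X \<Longrightarrow> path_from X u u []"
  by (simp add: path_from_def is_path_def)

lemma path_single: "fst d \<in> edges X \<Longrightarrow> path_from X (dsrc X d) (dtgt X d) [d]"
  by (simp add: path_from_def is_path_def dsrc_verts)

lemma conn_refl: "u \<in> verts X \<Longrightarrow> conn X u u"
  using path_nil by (auto simp: conn_def)

lemma conn_sym: "conn X u v \<Longrightarrow> conn X v u"
  using path_from_revp by (auto simp: conn_def)

lemma conn_trans: "conn X u v \<Longrightarrow> conn X v w \<Longrightarrow> conn X u w"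
  unfolding conn_def by (meson path_from_append)

lemma conn_dart: "fst d \<in> edges X \<Longrightarrow> conn X (dsrc X d) (dtgt X d)"
  unfolding conn_def using path_single by blast

lemma conn_verts: "conn X u v \<Longrightarrow> u \<in> verts X \<and> v \<in> verts X"
  using pf_start end_verts by (auto simp: conn_def)

lemma conn_pv: "path_from X u v p \<Longrightarrow> i \<le> length p \<Longrightarrow> conn X u (pv X u p i)"
  unfolding conn_def by (meson path_from_take)

lemma dn_le: "path_from X u v p \<Longrightarrow> dn X u v \<le> length p"
  unfolding dn_def by (rule Least_le) blast

lemma dn_ex: "conn X u v \<Longrightarrow> \<exists>p. path_from X u v p \<and> length p = dn X u v"
  unfolding dn_def conn_def by (rule LeastI_ex) blast

lemma dn_geo: "conn X u v \<Longrightarrow> \<exists>p. geo X u v p"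
  using dn_ex by (auto simp: geo_def)

lemma dn_refl: "u \<in> verts X \<Longrightarrow> dn X u u = 0"
  using dn_le[OF path_nil] by simp

lemma dn_0: "conn X u v \<Longrightarrow> dn X u v = 0 \<Longrightarrow> u = v"
  using dn_ex[of u v] path_from_pv_end[of X u v] by fastforce

lemma dn_sym: "conn X u v \<Longrightarrow> dn X u v = dn X v u"
proof -
  have *: "dn X v u \<le> dn X u v" if "conn X u v" for u v
  proof -
    from dn_ex[OF that] obtain p where p: "path_from X u v p" "length p = dn X u v" by blast
    show ?thesis using dn_le[OF path_from_revp[OF p(1)]] p(2) by simp
  qed
  assume "conn X u v" then show ?thesis using *[of u v] *[of v u] conn_sym by fastforce
qed

lemma dn_tri: "conn X u v \<Longrightarrow> conn X v w \<Longrightarrow> dn X u w \<le> dn X u v + dn X v w"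
proof -
  assume "conn X u v" "conn X v w"
  then obtain p q where "path_from X u v p" "length p = dn X u v" and "path_from X v w q" "length q = dn X v w"
    using dn_ex by blast
  then show ?thesis using dn_le[OF path_from_append] by fastforce
qed

lemma dn_dart: "fst d \<in> edges X \<Longrightarrow> dn X (dsrc X d) (dtgt X d) \<le> 1"
  using dn_le[OF path_single] by fastforce

lemma gdist_conn: "conn X u v \<Longrightarrow> gdist X u v = ereal (real (dn X u v))"
  unfolding gdist_def
proof (rule Inf_eqI)
  assume c: "conn X u v"
  fix i assume "i \<in> {ereal (real (length p)) |p. path_from X u v p}"
  then show "ereal (real (dn X u v)) \<le> i" using dn_le by auto
next
  assume c: "conn X u v"
  fix y assume "\<And>i. i \<in> {ereal (real (length p)) |p. path_from X u v p} \<Longrightarrow> y \<le> i"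
  moreover obtain p where "path_from X u v p" "length p = dn X u v" using dn_ex[OF c] by blast
  ultimately show "y \<le> ereal (real (dn X u v))" by force
qed

lemma geodesic_geo: "geodesic X u v p \<longleftrightarrow> geo X u v p"
proof
  assume H: "geodesic X u v p"
  then have c: "conn X u v" by (auto simp: geodesic_def conn_def)
  then show "geo X u v p" using H gdist_conn[OF c] by (auto simp: geodesic_def geo_def)
next
  assume H: "geo X u v p"
  then have c: "conn X u v" by (auto simp: geo_def conn_def)
  then show "geodesic X u v p" using H gdist_conn[OF c] by (auto simp: geodesic_def geo_def)
qed

lemma geo_sub:
  assumes g: "geo X u v p" and ij: "i \<le> j" "j \<le> length p"
  shows "dn X (pv X u p i) (pv X u p j) = j - i"
proof -
  have P: "path_from X u v p" and L: "length p = dn X u v" using g by (auto simp: geo_def)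
  have pij: "path_from X (pv X u p i) (pv X u p j) (take (j - i) (drop i p))"
  proof -
    have "path_from X (pv X u p i) v (drop i p)" using path_from_drop[OF P] ij by simp
    from path_from_take[OF this, of "j - i"] ij
    show ?thesis using pv_drop[of i "j - i" p X u] by simp
  qed
  have le: "dn X (pv X u p i) (pv X u p j) \<le> j - i" using dn_le[OF pij] ij by simp
  have c1: "conn X u (pv X u p i)" using conn_pv[OF P] ij by simp
  have c2: "conn X (pv X u p i) (pv X u p j)" using pij by (auto simp: conn_def)
  have c3: "conn X (pv X u p j) v" using path_from_drop[OF P, of j] ij by (auto simp: conn_def)
  have "dn X u (pv X u p i) \<le> i" using dn_le[OF path_from_take[OF P, of i]] ij by simp
  moreover have "dn X (pv X u p j) v \<le> length p - j" using dn_le[OF path_from_drop[OF P, of j]] ij by simp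
  moreover have "dn X u v \<le> dn X u (pv X u p i) + dn X (pv X u p i) (pv X u p j) + dn X (pv X u p j) v"
    using dn_tri[OF c1 conn_trans[OF c2 c3]] dn_tri[OF c2 c3] by linarith
  ultimately show ?thesis using le L ij by linarith
qed

lemma geo_sub': "geo X u v p \<Longrightarrow> i \<le> length p \<Longrightarrow> j \<le> length p \<Longrightarrow>
    real (dn X (pv X u p i) (pv X u p j)) = \<bar>real i - real j\<bar>"
proof -
  assume g: "geo X u v p" "i \<le> length p" "j \<le> length p"
  have P: "path_from X u v p" using g by (simp add: geo_def)
  show ?thesis
  proof (cases "i \<le> j")
    case True then show ?thesis using geo_sub[OF g(1) True g(3)] by simp
  next
    case False
    have "conn X (pv X u p j) (pv X u p i)"
      using conn_trans[OF conn_sym[OF conn_pv[OF P g(3)]] conn_pv[OF P g(2)]] .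
    then show ?thesis using geo_sub[OF g(1), of j i] False g dn_sym by auto
  qed
qed

lemma geo_revp: "geo X u v p \<Longrightarrow> geo X v u (revp p)"
proof -
  assume g: "geo X u v p"
  then have P: "path_from X u v p" "length p = dn X u v" by (auto simp: geo_def)
  then have "conn X u v" by (auto simp: conn_def)
  then show ?thesis using P path_from_revp[OF P(1)] dn_sym by (simp add: geo_def)
qed

lemma geo_take: "geo X u v p \<Longrightarrow> i \<le> length p \<Longrightarrow> geo X u (pv X u p i) (take i p)"
proof -
  assume g: "geo X u v p" and i: "i \<le> length p"
  then have P: "path_from X u v p" by (auto simp: geo_def)
  show ?thesis using path_from_take[OF P i] geo_sub[OF g, of 0 i] i by (simp add: geo_def)
qed

lemma geo_drop: "geo X u v p \<Longrightarrow> i \<le> length p \<Longrightarrow> geo X (pv X u p i) v (drop i p)"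
proof -
  assume g: "geo X u v p" and i: "i \<le> length p"
  then have P: "path_from X u v p" by (auto simp: geo_def)
  show ?thesis using path_from_drop[OF P i] geo_sub[OF g, of i "length p"] i path_from_pv_end[OF P]
    by (simp add: geo_def)
qed

end


definition lip :: "('v,'e,'f) cx \<Rightarrow> ('v \<Rightarrow> real) \<Rightarrow> bool" where
  "lip X f \<longleftrightarrow> (\<forall>e\<in>edges X. \<bar>f (fst (ends X e)) - f (snd (ends X e))\<bar> \<le> 1)"

definition Ic :: "('v,'e,'f) cx \<Rightarrow> ('v \<Rightarrow> real) \<Rightarrow> ('v \<Rightarrow> real) \<Rightarrow> ('e \<times> bool) list \<Rightarrow> real" where
  "Ic X f g p = sum_list (map (\<lambda>d. (g (dsrc X d) + g (dtgt X d)) / 2 * (f (dtgt X d) - f (dsrc X d))) p)"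

lemma Ic_nil[simp]: "Ic X f g [] = 0" by (simp add: Ic_def)
lemma Ic_cons: "Ic X f g (d # p) = (g (dsrc X d) + g (dtgt X d)) / 2 * (f (dtgt X d) - f (dsrc X d)) + Ic X f g p"
  by (simp add: Ic_def)
lemma Ic_append: "Ic X f g (p @ q) = Ic X f g p + Ic X f g q" by (simp add: Ic_def)
lemma Ic_snoc: "Ic X f g (p @ [d]) = Ic X f g p + (g (dsrc X d) + g (dtgt X d)) / 2 * (f (dtgt X d) - f (dsrc X d))"
  by (simp add: Ic_def)

lemma Ic_revp: "Ic X f g (revp p) = - Ic X f g p"
proof (induction p)
  case Nil then show ?case by (simp add: revp_def)
next
  case (Cons d p)
  have "revp (d # p) = revp p @ [dinv d]" by (simp add: revp_def)
  have t: "Ic X f g [dinv d] = - Ic X f g [d]"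
    by (simp add: Ic_def) (simp add: field_simps)
  have "Ic X f g (revp (d # p)) = Ic X f g (revp p) + Ic X f g [dinv d]"
    by (simp add: \<open>revp (d # p) = revp p @ [dinv d]\<close> Ic_append)
  also have "\<dots> = - Ic X f g (d # p)" using Cons t by (simp add: Ic_cons Ic_def)
  finally show ?case .
qed

lemma sum_list_rotate_map: "sum_list (map h (rotate k p)) = (sum_list (map h p) :: real)"
proof -
  let ?n = "k mod length p"
  have A: "sum_list (map h (rotate k p)) = sum_list (map h (drop ?n p)) + sum_list (map h (take ?n p))"
    by (simp add: rotate_drop_take)
  have B: "sum_list (map h p) = sum_list (map h (take ?n p)) + sum_list (map h (drop ?n p))"
    by (metis append_take_drop_id map_append sum_list_append)
  show ?thesis using A B by simp
qed

lemma Ic_rotate: "Ic X f g (rotate k p) = Ic X f g p"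
  unfolding Ic_def by (rule sum_list_rotate_map)

lemma Ic_bt: "Ic X f g (u @ d # dinv d # w) = Ic X f g (u @ w)"
  by (simp add: Ic_append Ic_cons field_simps)

lemma lip_dart: "lip X f \<Longrightarrow> fst d \<in> edges X \<Longrightarrow> \<bar>f (dtgt X d) - f (dsrc X d)\<bar> \<le> 1"
  unfolding lip_def dtgt_def dsrc_def by (cases "snd d") (auto simp: abs_minus_commute)

lemma is_path_snoc: "is_path X (p @ [d]) \<Longrightarrow> is_path X p \<and> fst d \<in> edges X \<and> (p \<noteq> [] \<longrightarrow> dtgt X (last p) = dsrc X d)"
  unfolding is_path_def
proof (intro conjI impI allI)
  assume H: "fst ` set (p @ [d]) \<subseteq> edges X \<and> (\<forall>i. Suc i < length (p @ [d]) \<longrightarrow> dtgt X ((p @ [d]) ! i) = dsrc X ((p @ [d]) ! Suc i))"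
  show "fst ` set p \<subseteq> edges X" "fst d \<in> edges X" using H by auto
  fix i assume "Suc i < length p"
  then show "dtgt X (p ! i) = dsrc X (p ! Suc i)" using H[THEN conjunct2, rule_format, of i] by (simp add: nth_append)
next
  assume H: "fst ` set (p @ [d]) \<subseteq> edges X \<and> (\<forall>i. Suc i < length (p @ [d]) \<longrightarrow> dtgt X ((p @ [d]) ! i) = dsrc X ((p @ [d]) ! Suc i))"
    and ne: "p \<noteq> []"
  then show "dtgt X (last p) = dsrc X d" using H[THEN conjunct2, rule_format, of "length p - 1"]
    by (simp add: nth_append last_conv_nth)
qed

lemma path_lip: "lip X g \<Longrightarrow> is_path X p \<Longrightarrow> p \<noteq> [] \<Longrightarrow> \<bar>g (dtgt X (last p)) - g (dsrc X (hd p))\<bar> \<le> real (length p)"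
proof (induction p rule: rev_induct)
  case Nil then show ?case by simp
next
  case (snoc d p)
  note S = is_path_snoc[OF snoc.prems(2)]
  show ?case
  proof (cases "p = []")
    case True then show ?thesis using lip_dart[OF snoc.prems(1)] S by simp
  next
    case False
    have "\<bar>g (dtgt X (last p)) - g (dsrc X (hd p))\<bar> \<le> real (length p)" using snoc.IH snoc.prems(1) S False by blast
    moreover have "\<bar>g (dtgt X d) - g (dsrc X d)\<bar> \<le> 1" using lip_dart[OF snoc.prems(1)] S by blast
    ultimately show ?thesis using False S by simp
  qed
qed

lemma path_Ic_bound:
  assumes lf: "lip X f" and lg: "lip X g"
  shows "is_path X p \<Longrightarrow> p \<noteq> [] \<Longrightarrow>
    \<bar>Ic X f g p - g (dsrc X (hd p)) * (f (dtgt X (last p)) - f (dsrc X (hd p)))\<bar> \<le> (real (length p))^2 / 2"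
proof (induction p rule: rev_induct)
  case Nil then show ?case by simp
next
  case (snoc d p)
  note S = is_path_snoc[OF snoc.prems(1)]
  have df: "\<bar>f (dtgt X d) - f (dsrc X d)\<bar> \<le> 1" using lip_dart[OF lf] S by blast
  have dg: "\<bar>g (dtgt X d) - g (dsrc X d)\<bar> \<le> 1" using lip_dart[OF lg] S by blast
  show ?case
  proof (cases "p = []")
    case True
    have "(g (dsrc X d) + g (dtgt X d)) / 2 * (f (dtgt X d) - f (dsrc X d)) - g (dsrc X d) * (f (dtgt X d) - f (dsrc X d))
        = ((g (dtgt X d) - g (dsrc X d)) / 2) * (f (dtgt X d) - f (dsrc X d))"
      by (simp add: field_simps)
    then have "\<bar>(g (dsrc X d) + g (dtgt X d)) / 2 * (f (dtgt X d) - f (dsrc X d)) - g (dsrc X d) * (f (dtgt X d) - f (dsrc X d))\<bar>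
        = \<bar>(g (dtgt X d) - g (dsrc X d)) / 2\<bar> * \<bar>f (dtgt X d) - f (dsrc X d)\<bar>"
      unfolding abs_mult[symmetric] by (rule arg_cong)
    also have "\<dots> \<le> 1/2 * 1" using df dg by (intro mult_mono) auto
    finally show ?thesis using True by (simp add: Ic_def)
  next
    case False
    let ?s = "dsrc X (hd p)" and ?e = "dtgt X (last p)"
    have IH: "\<bar>Ic X f g p - g ?s * (f ?e - f ?s)\<bar> \<le> (real (length p))^2 / 2" using snoc.IH S False by blast
    have e: "?e = dsrc X d" using S False by blast
    have pg: "\<bar>g (dsrc X d) - g ?s\<bar> \<le> real (length p)" using path_lip[OF lg _ False] S e by simp
    have hd: "hd (p @ [d]) = hd p" "last (p @ [d]) = d" using False by auto
    have eq: "Ic X f g (p @ [d]) - g ?s * (f (dtgt X d) - f ?s)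
       = (Ic X f g p - g ?s * (f ?e - f ?s)) + ((g (dsrc X d) + g (dtgt X d)) / 2 - g ?s) * (f (dtgt X d) - f (dsrc X d))"
      using e by (simp add: Ic_snoc algebra_simps)
    have "\<bar>(g (dsrc X d) + g (dtgt X d)) / 2 - g ?s\<bar> \<le> real (length p) + 1/2"
      using pg dg unfolding abs_le_iff add_divide_distrib by (intro conjI; linarith)
    then have "\<bar>(g (dsrc X d) + g (dtgt X d)) / 2 - g ?s\<bar> * \<bar>f (dtgt X d) - f (dsrc X d)\<bar> \<le> (real (length p) + 1/2) * 1"
      using df by (intro mult_mono) auto
    then have "\<bar>((g (dsrc X d) + g (dtgt X d)) / 2 - g ?s) * (f (dtgt X d) - f (dsrc X d))\<bar> \<le> real (length p) + 1/2"
      by (simp add: abs_mult)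
    moreover have "\<bar>Ic X f g (p @ [d]) - g ?s * (f (dtgt X d) - f ?s)\<bar> \<le> \<bar>Ic X f g p - g ?s * (f ?e - f ?s)\<bar> + \<bar>((g (dsrc X d) + g (dtgt X d)) / 2 - g ?s) * (f (dtgt X d) - f (dsrc X d))\<bar>"
      unfolding eq by (rule abs_triangle_ineq)
    ultimately have "\<bar>Ic X f g (p @ [d]) - g ?s * (f (dtgt X d) - f ?s)\<bar> \<le> (real (length p))^2 / 2 + (real (length p) + 1/2)"
      using IH by linarith
    also have "\<dots> = (real (length (p @ [d])))^2 / 2" by (simp add: power2_eq_square algebra_simps)
    finally show ?thesis using hd by simp
  qed
qed

lemma loop_Ic_bound:
  assumes "lip X f" "lip X g" "is_loop X c"
  shows "\<bar>Ic X f g c\<bar> \<le> (real (length c))^2 / 2"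
proof (cases "c = []")
  case True then show ?thesis by simp
next
  case False
  then show ?thesis using path_Ic_bound[OF assms(1,2), of c] assms(3) by (simp add: is_loop_def)
qed

lemma fills_Ic:
  assumes fb: "\<And>c. c \<in> face_loops X \<Longrightarrow> \<bar>Ic X f g c\<bar> \<le> B"
  shows "fills X k p \<Longrightarrow> \<bar>Ic X f g p\<bar> \<le> real k * B"
proof (induction rule: fills.induct)
  case fills_nil then show ?case by simp
next
  case (fills_del k u w d) then show ?case by (simp add: Ic_bt)
next
  case (fills_ins u d w k) then show ?case by (simp add: Ic_bt)
next
  case (fills_face c u w k)
  have "\<bar>Ic X f g (u @ w)\<bar> \<le> \<bar>Ic X f g (u @ c @ w)\<bar> + \<bar>Ic X f g c\<bar>" by (simp add: Ic_append)
  then show ?case using fills_face fb[OF fills_face(1)] by (simp add: algebra_simps)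
qed

lemma face_bound:
  assumes tcx: "two_complex X" and N: "\<forall>f\<in>faces X. length (bdry X f) \<le> N"
    and lf: "lip X f" and lg: "lip X g" and c: "c \<in> face_loops X"
  shows "\<bar>Ic X f g c\<bar> \<le> (real N)^2 / 2"
proof -
  obtain k F where F: "F \<in> faces X" and cc: "c = rotate k (bdry X F) \<or> c = rotate k (revp (bdry X F))"
    using c by (auto simp: face_loops_def revp_def)
  have "\<bar>Ic X f g c\<bar> = \<bar>Ic X f g (bdry X F)\<bar>" using cc by (auto simp: Ic_rotate Ic_revp)
  also have "\<dots> \<le> (real (length (bdry X F)))^2 / 2"
    using loop_Ic_bound[OF lf lg] tcx F by (auto simp: two_complex_def)
  also have "\<dots> \<le> (real N)^2 / 2" using N F by (simp add: power_mono)
  finally show ?thesis .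
qed

lemma area_Ic:
  assumes tcx: "two_complex X" and N: "\<forall>f\<in>faces X. length (bdry X f) \<le> N" and N0: "0 < N"
    and lf: "lip X f" and lg: "lip X g"
  shows "ereal (2 * \<bar>Ic X f g p\<bar> / (real N)^2) \<le> area X p"
  unfolding area_def
proof (rule Inf_greatest)
  fix x assume "x \<in> {ereal (real k) |k. fills X k p}"
  then obtain k where x: "x = ereal (real k)" and fk: "fills X k p" by blast
  have "\<bar>Ic X f g p\<bar> \<le> real k * ((real N)^2 / 2)"
    by (rule fills_Ic[OF face_bound[OF tcx N lf lg] fk])
  then have "2 * \<bar>Ic X f g p\<bar> \<le> real k * (real N)^2" by simp
  then have "2 * \<bar>Ic X f g p\<bar> / (real N)^2 \<le> real k" using N0 by (simp add: pos_divide_le_eq)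
  then show "ereal (2 * \<bar>Ic X f g p\<bar> / (real N)^2) \<le> x" using x by simp
qed

lemma key_bound:
  fixes X :: "('v,'e,'f) cx" and N :: nat and \<kappa> :: real
  assumes tcx: "two_complex X"
    and N0: "0 < N"
    and N: "\<forall>f\<in>faces X. length (bdry X f) \<le> N"
    and H: "\<forall>\<gamma>. is_loop X \<gamma> \<longrightarrow> area X \<gamma> \<ge> ereal (18 * \<kappa>^2 * (real N)^2)
            \<longrightarrow> area X \<gamma> \<le> ereal (\<kappa> * real (length \<gamma>))"
    and lf: "lip X f" and lg: "lip X g" and lp: "is_loop X \<gamma>"
  shows "\<bar>Ic X f g \<gamma>\<bar> \<le> max (9 * (\<kappa> * (real N)^2)^2) (\<kappa> * (real N)^2 * real (length \<gamma>) / 2)"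
proof -
  let ?a = "2 * \<bar>Ic X f g \<gamma>\<bar> / (real N)^2"
  have A: "ereal ?a \<le> area X \<gamma>" by (rule area_Ic[OF tcx N N0 lf lg])
  have Np: "(real N)^2 > 0" using N0 by simp
  show ?thesis
  proof (cases "?a \<ge> 18 * \<kappa>^2 * (real N)^2")
    case True
    then have "ereal (18 * \<kappa>^2 * (real N)^2) \<le> ereal ?a" by (simp only: ereal_less_eq)
    then have "area X \<gamma> \<ge> ereal (18 * \<kappa>^2 * (real N)^2)" using A by (rule order_trans)
    then have "area X \<gamma> \<le> ereal (\<kappa> * real (length \<gamma>))" using H lp by blast
    then have "ereal ?a \<le> ereal (\<kappa> * real (length \<gamma>))" using A by (rule order_trans[rotated])
    then have "?a \<le> \<kappa> * real (length \<gamma>)" by (simp only: ereal_less_eq)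
    then have "2 * \<bar>Ic X f g \<gamma>\<bar> \<le> \<kappa> * real (length \<gamma>) * (real N)^2" using Np
      by (simp add: pos_divide_le_eq)
    then have "\<bar>Ic X f g \<gamma>\<bar> \<le> \<kappa> * (real N)^2 * real (length \<gamma>) / 2" by (simp add: algebra_simps)
    then show ?thesis by simp
  next
    case False
    then have "?a < 18 * \<kappa>^2 * (real N)^2" by simp
    then have "2 * \<bar>Ic X f g \<gamma>\<bar> < 18 * \<kappa>^2 * (real N)^2 * (real N)^2" using Np
      by (simp only: pos_divide_less_eq)
    moreover have "18 * \<kappa>^2 * (real N)^2 * (real N)^2 = 2 * (9 * (\<kappa> * (real N)^2)^2)"
      by (simp add: power2_eq_square)
    ultimately have "\<bar>Ic X f g \<gamma>\<bar> \<le> 9 * (\<kappa> * (real N)^2)^2" by linarith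
    then show ?thesis by simp
  qed
qed



definition phi :: "nat \<Rightarrow> nat \<Rightarrow> nat \<Rightarrow> real" where
  "phi t0 R t = min \<bar>real t - real t0\<bar> (real R)"

definition Psi :: "nat \<Rightarrow> nat \<Rightarrow> nat \<Rightarrow> real" where
  "Psi t0 R n = (\<Sum>t<n. (real t + 1/2) * (phi t0 R (Suc t) - phi t0 R t))"

definition CF :: "nat \<Rightarrow> nat \<Rightarrow> nat \<Rightarrow> real" where
  "CF a R n = (if n \<le> a then 0
     else if n \<le> a + R then - ((real n)^2 - (real a)^2) / 2
     else if n \<le> a + 2 * R then ((real n)^2 - 2 * (real a + real R)^2 + (real a)^2) / 2
     else (real R)^2)"

lemma Psi_closed: "Psi (a + R) R n = CF a R n"
proof (induction n)
  case 0 then show ?case by (simp add: Psi_def CF_def)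
next
  case (Suc n)
  have PS: "Psi (a + R) R (Suc n) = Psi (a + R) R n + (real n + 1/2) * (phi (a + R) R (Suc n) - phi (a + R) R n)"
    by (simp add: Psi_def)
  consider "Suc n \<le> a" | "a \<le> n \<and> Suc n \<le> a + R" | "a + R \<le> n \<and> Suc n \<le> a + 2*R" | "a + 2 * R \<le> n"
    by linarith
  then show ?case
  proof cases
    case 1
    then have "phi (a + R) R (Suc n) = R" "phi (a + R) R n = R" by (auto simp: phi_def)
    then show ?thesis using Suc.IH 1 PS by (simp add: CF_def)
  next
    case 2
    then have v: "phi (a + R) R (Suc n) = real a + real R - real n - 1" "phi (a + R) R n = real a + real R - real n"
      by (auto simp: phi_def)
    have ih: "Psi (a + R) R n = - ((real n)^2 - (real a)^2) / 2" using Suc.IH 2 by (auto simp: CF_def)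
    have "Psi (a + R) R (Suc n) = - ((real n)^2 - (real a)^2) / 2 + (real n + 1/2) * ((real a + real R - real n - 1) - (real a + real R - real n))"
      by (simp only: PS v ih)
    also have "\<dots> = - ((real (Suc n))^2 - (real a)^2) / 2" by (simp add: power2_eq_square field_simps)
    finally show ?thesis using 2 by (simp add: CF_def)
  next
    case 3
    then have v: "phi (a + R) R (Suc n) = real n + 1 - real a - real R" "phi (a + R) R n = real n - real a - real R"
      by (auto simp: phi_def)
    have ih: "Psi (a + R) R n = ((real n)^2 - 2 * (real a + real R)^2 + (real a)^2) / 2"
      using Suc.IH 3 by (cases "n = a + R") (auto simp: CF_def power2_eq_square field_simps)
    have "Psi (a + R) R (Suc n) = ((real n)^2 - 2 * (real a + real R)^2 + (real a)^2) / 2 + (real n + 1/2) * ((real n + 1 - real a - real R) - (real n - real a - real R))"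
      by (simp only: PS v ih)
    also have "\<dots> = ((real (Suc n))^2 - 2 * (real a + real R)^2 + (real a)^2) / 2" by (simp add: power2_eq_square field_simps)
    finally show ?thesis using 3 by (auto simp: CF_def)
  next
    case 4
    then have v: "phi (a + R) R (Suc n) = R" "phi (a + R) R n = R" by (auto simp: phi_def)
    have ih: "Psi (a + R) R n = (real R)^2"
    proof (cases "n = a + 2 * R")
      case True then show ?thesis using Suc.IH by (simp add: CF_def power2_eq_square field_simps)
    next
      case False then show ?thesis using Suc.IH 4 by (simp add: CF_def)
    qed
    have "Psi (a + R) R (Suc n) = (real R)^2" by (simp add: PS v ih)
    then show ?thesis using 4 by (simp add: CF_def)
  qed
qed



lemma Psi_window:
  assumes "i1 + R \<le> t0" "t0 + R \<le> i2"
  shows "Psi t0 R i2 - Psi t0 R i1 = (real R)^2"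
proof -
  define a where "a = t0 - R"
  have t0: "t0 = a + R" using assms a_def by simp
  have "Psi t0 R i2 = (real R)^2"
    using Psi_closed[of a R i2] t0 assms
    by (cases "i2 = a + 2 * R") (auto simp: CF_def power2_eq_square field_simps)
  moreover have "Psi t0 R i1 = 0" using Psi_closed[of a R i1] t0 assms by (simp add: CF_def)
  ultimately show ?thesis by simp
qed

lemma sum_shift_lt: fixes m :: nat shows "(\<Sum>k<m. h (i + k)) = (\<Sum>t<i + m. h t) - (\<Sum>t<i. (h t :: real))"
  by (induction m) (simp_all add: algebra_simps)

lemma sum_list_zero: "(\<forall>x\<in>set xs. h x = 0) \<Longrightarrow> sum_list (map h xs) = (0::real)"
  by (induction xs) auto

definition fR :: "('v,'e,'f) cx \<Rightarrow> 'v \<Rightarrow> nat \<Rightarrow> 'v \<Rightarrow> real" where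
  "fR X z R v = (if conn X v z then min (real (dn X v z)) (real R) else real R)"

lemma path_loop: "path_from X u u p \<Longrightarrow> is_loop X p"
  by (auto simp: path_from_def is_loop_def)

context tc begin

lemma lip_fR: "lip X (fR X z R)"
  unfolding lip_def
proof
  fix e assume e: "e \<in> edges X"
  let ?v1 = "fst (ends X e)" and ?v2 = "snd (ends X e)"
  have d: "dsrc X (e, True) = ?v1" "dtgt X (e, True) = ?v2" by (auto simp: dsrc_def dtgt_def)
  have c12: "conn X ?v1 ?v2" using conn_dart[of "(e, True)"] e d by simp
  have d12: "dn X ?v1 ?v2 \<le> 1" using dn_dart[of "(e, True)"] e d by simp
  have d21: "dn X ?v2 ?v1 \<le> 1" using d12 dn_sym[OF c12] by simp
  show "\<bar>fR X z R ?v1 - fR X z R ?v2\<bar> \<le> 1"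
  proof (cases "conn X ?v1 z")
    case True
    then have c2: "conn X ?v2 z" using conn_trans[OF conn_sym[OF c12]] by blast
    have "dn X ?v1 z \<le> dn X ?v1 ?v2 + dn X ?v2 z" using dn_tri[OF c12 c2] .
    moreover have "dn X ?v2 z \<le> dn X ?v2 ?v1 + dn X ?v1 z" using dn_tri[OF conn_sym[OF c12] True] .
    ultimately have "real (dn X ?v1 z) \<le> real (dn X ?v2 z) + 1" "real (dn X ?v2 z) \<le> real (dn X ?v1 z) + 1"
      using d12 d21 by linarith+
    then show ?thesis using True c2 unfolding fR_def by (simp add: abs_le_iff min_def)
  next
    case False
    then have "\<not> conn X ?v2 z" using conn_trans[OF c12] by blast
    then show ?thesis using False by (simp add: fR_def)
  qed
qed

lemma Ic_zero:
  assumes w: "path_from X y x w" and av: "\<forall>k \<le> length w. fR X z R (pv X y w k) = c"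
  shows "Ic X f' (fR X z R) w = 0 \<or> True"
  by simp

lemma Ic_const_f:
  assumes w: "path_from X y x w" and av: "\<forall>k \<le> length w. f (pv X y w k) = c"
  shows "Ic X f g w = 0"
proof -
  have "\<forall>d\<in>set w. (g (dsrc X d) + g (dtgt X d)) / 2 * (f (dtgt X d) - f (dsrc X d)) = 0"
  proof
    fix d assume "d \<in> set w"
    then obtain k where k: "k < length w" and dk: "d = w ! k" by (auto simp: in_set_conv_nth)
    have "dsrc X (w ! k) = pv X y w k" using path_from_src[OF w k] .
    moreover have "dtgt X (w ! k) = pv X y w (Suc k)" using path_from_tgt[OF w k] .
    ultimately show "(g (dsrc X d) + g (dtgt X d)) / 2 * (f (dtgt X d) - f (dsrc X d)) = 0"
      using av k dk by simp
  qed
  then show ?thesis unfolding Ic_def by (rule sum_list_zero)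
qed

end

locale hyp = tc X for X :: "('v,'e,'f) cx" +
  fixes M :: real
  assumes M1: "1 \<le> M"
    and key: "\<And>f g \<gamma>. lip X f \<Longrightarrow> lip X g \<Longrightarrow> is_loop X \<gamma> \<Longrightarrow>
        \<bar>Ic X f g \<gamma>\<bar> \<le> max (9 * M^2) (M * real (length \<gamma>) / 2)"
begin

lemma loopL:
  assumes g: "geo X u v \<alpha>" and t0: "t0 \<le> length \<alpha>"
    and win: "i1 + R \<le> t0" "t0 + R \<le> i2" "i2 \<le> length \<alpha>"
    and w: "path_from X (pv X u \<alpha> i2) (pv X u \<alpha> i1) \<omega>"
    and av: "\<forall>k \<le> length \<omega>. conn X (pv X (pv X u \<alpha> i2) \<omega> k) (pv X u \<alpha> t0) \<and>
                 R \<le> dn X (pv X (pv X u \<alpha> i2) \<omega> k) (pv X u \<alpha> t0)"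
  shows "(real R)^2 \<le> max (9 * M^2) (M * real (i2 - i1 + length \<omega>) / 2)"
proof -
  have P: "path_from X u v \<alpha>" using g by (simp add: geo_def)
  let ?z = "pv X u \<alpha> t0"
  define \<sigma> where "\<sigma> = take (i2 - i1) (drop i1 \<alpha>)"
  have i12: "i1 \<le> i2" using win by simp
  have ls: "length \<sigma> = i2 - i1" using win by (simp add: \<sigma>_def)
  have pvs: "pv X (pv X u \<alpha> i1) \<sigma> k = pv X u \<alpha> (i1 + k)" if "k \<le> i2 - i1" for k
    using that win pv_take[of k "i2 - i1" "drop i1 \<alpha>" X "pv X u \<alpha> i1"] pv_drop[of i1 k \<alpha> X u] by (simp add: \<sigma>_def)
  have Ps: "path_from X (pv X u \<alpha> i1) (pv X u \<alpha> i2) \<sigma>"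
  proof -
    have "path_from X (pv X u \<alpha> i1) v (drop i1 \<alpha>)" using path_from_drop[OF P] win by simp
    from path_from_take[OF this, of "i2 - i1"] show ?thesis
      using win pv_drop[of i1 "i2 - i1" \<alpha> X u] by (simp add: \<sigma>_def)
  qed
  have loop: "is_loop X (\<sigma> @ \<omega>)" using path_loop[OF path_from_append[OF Ps w]] .
  let ?f = "fR X ?z R" and ?g = "fR X u (length \<alpha>)"
  have K: "\<bar>Ic X ?f ?g (\<sigma> @ \<omega>)\<bar> \<le> max (9 * M^2) (M * real (length (\<sigma> @ \<omega>)) / 2)"
    using key[OF lip_fR lip_fR loop] .
  have I\<omega>: "Ic X ?f ?g \<omega> = 0"
    by (rule Ic_const_f[OF w, of _ "real R"]) (use av in \<open>simp add: fR_def\<close>)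
  have fv: "?f (pv X u \<alpha> t) = phi t0 R t" if "t \<le> length \<alpha>" for t
  proof -
    have c: "conn X (pv X u \<alpha> t) ?z"
      using conn_trans[OF conn_sym[OF conn_pv[OF P that]] conn_pv[OF P t0]] .
    show ?thesis using geo_sub'[OF g that t0] c by (simp add: fR_def phi_def)
  qed
  have gv: "?g (pv X u \<alpha> t) = real t" if "t \<le> length \<alpha>" for t
  proof -
    have c: "conn X (pv X u \<alpha> t) u" using conn_sym[OF conn_pv[OF P that]] .
    show ?thesis using geo_sub'[OF g that, of 0] c that by (simp add: fR_def)
  qed
  have I\<sigma>: "Ic X ?f ?g \<sigma> = (real R)^2"
  proof -
    have "Ic X ?f ?g \<sigma> = (\<Sum>k<length \<sigma>. (?g (dsrc X (\<sigma> ! k)) + ?g (dtgt X (\<sigma> ! k))) / 2 * (?f (dtgt X (\<sigma> ! k)) - ?f (dsrc X (\<sigma> ! k))))"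
      unfolding Ic_def by (simp add: sum_list_sum_nth atLeast0LessThan)
    also have "\<dots> = (\<Sum>k<i2 - i1. (real (i1 + k) + 1/2) * (phi t0 R (Suc (i1 + k)) - phi t0 R (i1 + k)))"
      unfolding ls
    proof (rule sum.cong[OF refl])
      fix k assume "k \<in> {..<i2 - i1}"
      then have k: "k < i2 - i1" by simp
      have s: "dsrc X (\<sigma> ! k) = pv X u \<alpha> (i1 + k)" using path_from_src[OF Ps, of k] k ls pvs[of k] by simp
      have t: "dtgt X (\<sigma> ! k) = pv X u \<alpha> (Suc (i1 + k))" using path_from_tgt[OF Ps, of k] k ls pvs[of "Suc k"] by simp
      have l1: "i1 + k \<le> length \<alpha>" "Suc (i1 + k) \<le> length \<alpha>" using k win by linarith+
      show "(?g (dsrc X (\<sigma> ! k)) + ?g (dtgt X (\<sigma> ! k))) / 2 * (?f (dtgt X (\<sigma> ! k)) - ?f (dsrc X (\<sigma> ! k)))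
          = (real (i1 + k) + 1/2) * (phi t0 R (Suc (i1 + k)) - phi t0 R (i1 + k))"
        unfolding s t fv[OF l1(1)] fv[OF l1(2)] gv[OF l1(1)] gv[OF l1(2)] by (simp add: field_simps)
    qed
    also have "\<dots> = Psi t0 R (i1 + (i2 - i1)) - Psi t0 R i1"
      unfolding Psi_def by (rule sum_shift_lt[where h = "\<lambda>t. (real t + 1/2) * (phi t0 R (Suc t) - phi t0 R t)"])
    also have "\<dots> = (real R)^2" using Psi_window[OF win(1,2)] i12 by simp
    finally show ?thesis .
  qed
  have "(real R)^2 = \<bar>Ic X ?f ?g (\<sigma> @ \<omega>)\<bar>" using I\<sigma> I\<omega> by (simp add: Ic_append)
  then show ?thesis using K ls by simp
qed

end


definition dS :: "('v,'e,'f) cx \<Rightarrow> 'v set \<Rightarrow> 'v \<Rightarrow> nat" where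
  "dS X S q = Min ((\<lambda>s. dn X q s) ` S)"

definition Av :: "('v,'e,'f) cx \<Rightarrow> 'v \<Rightarrow> nat \<Rightarrow> 'v \<Rightarrow> ('e \<times> bool) list \<Rightarrow> bool" where
  "Av X z r y w \<longleftrightarrow> (\<forall>k \<le> length w. conn X (pv X y w k) z \<and> r \<le> dn X (pv X y w k) z)"

lemma dS_le: "finite S \<Longrightarrow> s \<in> S \<Longrightarrow> dS X S q \<le> dn X q s"
  unfolding dS_def by (rule Min_le) auto

lemma dS_ex: assumes "finite S" "S \<noteq> {}" shows "\<exists>s\<in>S. dn X q s = dS X S q"
proof -
  have "Min ((\<lambda>s. dn X q s) ` S) \<in> (\<lambda>s. dn X q s) ` S" by (rule Min_in) (use assms in auto)
  then obtain s where "s \<in> S" "Min ((\<lambda>s. dn X q s) ` S) = dn X q s" by blast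
  then show ?thesis unfolding dS_def by metis
qed

lemma ex_max_nat_fun: "\<exists>t0\<le>(n::nat). \<forall>t\<le>n. (h t :: nat) \<le> h t0"
proof -
  have "Max (h ` {..n}) \<in> h ` {..n}" by (rule Max_in) auto
  then obtain t0 where "t0 \<in> {..n}" "Max (h ` {..n}) = h t0" by (rule imageE)
  moreover have "\<forall>t\<le>n. h t \<le> Max (h ` {..n})" by (auto intro: Max_ge)
  ultimately show ?thesis by auto
qed

lemma pv_append_cases:
  assumes "path_from X u v p" "k \<le> length (p @ q)"
  shows "(\<exists>k'\<le>length p. pv X u (p @ q) k = pv X u p k') \<or> (\<exists>k'\<le>length q. pv X u (p @ q) k = pv X v q k')"
proof (cases "k \<le> length p")
  case True
  then have "pv X u (p @ q) k = pv X u p k" by (rule pv_append1)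
  then show ?thesis using True by blast
next
  case False
  define j where "j = k - length p"
  have j: "k = length p + j" using False j_def by simp
  then have "pv X u (p @ q) k = pv X v q j" using pv_append2[of X u p q j] path_from_pv_end[OF assms(1)] by simp
  moreover have "j \<le> length q" using assms(2) j by simp
  ultimately show ?thesis by blast
qed

lemma Av_append: assumes "path_from X y m w1" "Av X z r y w1" "Av X z r m w2" shows "Av X z r y (w1 @ w2)"
  unfolding Av_def
proof (intro allI impI)
  fix k assume "k \<le> length (w1 @ w2)"
  from pv_append_cases[OF assms(1) this]
  show "conn X (pv X y (w1 @ w2) k) z \<and> r \<le> dn X (pv X y (w1 @ w2) k) z"
  proof (elim disjE exE conjE)
    fix k' assume "k' \<le> length w1" "pv X y (w1 @ w2) k = pv X y w1 k'"
    then show ?thesis using assms(2) unfolding Av_def by simp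
  next
    fix k' assume "k' \<le> length w2" "pv X y (w1 @ w2) k = pv X m w2 k'"
    then show ?thesis using assms(3) unfolding Av_def by simp
  qed
qed

context tc begin

lemma geo_vert:
  assumes g: "geo X a b c" and k: "k \<le> length c"
  shows "dn X a (pv X a c k) = k" "dn X (pv X a c k) b = length c - k"
proof -
  have P: "path_from X a b c" using g by (simp add: geo_def)
  show "dn X a (pv X a c k) = k" using geo_sub[OF g, of 0 k] k by simp
  show "dn X (pv X a c k) b = length c - k" using geo_sub[OF g k order_refl] path_from_pv_end[OF P] by simp
qed

lemma connector_Av:
  assumes g: "geo X b y c" and cz: "conn X b z"
    and hy: "r \<le> dn X y z" and hb: "2 * r \<le> dn X b z + dn X y z - length c"
  shows "Av X z r b c"
  unfolding Av_def
proof (intro allI impI conjI)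
  fix k assume k: "k \<le> length c"
  have P: "path_from X b y c" using g by (simp add: geo_def)
  let ?q = "pv X b c k"
  have cq: "conn X b ?q" using conn_pv[OF P k] .
  show cqz: "conn X ?q z" using conn_trans[OF conn_sym[OF cq] cz] .
  have cqy: "conn X ?q y" using path_from_drop[OF P k] by (auto simp: conn_def)
  have cyz: "conn X y z" using conn_trans[OF conn_sym[OF cqy] cqz] .
  have "dn X b z \<le> dn X b ?q + dn X ?q z" using dn_tri[OF cq cqz] .
  moreover have "dn X y z \<le> dn X y ?q + dn X ?q z" using dn_tri[OF conn_sym[OF cqy] cqz] .
  moreover have "dn X b ?q = k" "dn X ?q y = length c - k" using geo_vert[OF g k] by auto
  moreover have "dn X y ?q = dn X ?q y" using dn_sym[OF cqy] by simp
  ultimately show "r \<le> dn X ?q z" using hb k by linarith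
qed

end

context hyp begin

lemma fatL:
  assumes g: "geo X u v \<alpha>" and fS: "finite S" and uS: "u \<in> S" and vS: "v \<in> S"
    and Sc: "\<forall>s\<in>S. conn X s u"
    and RT: "\<And>z r x y. (\<forall>s\<in>S. r \<le> dn X s z) \<Longrightarrow> conn X z u \<Longrightarrow> x \<in> S \<Longrightarrow> y \<in> S \<Longrightarrow>
              dn X x z \<le> 3 * r \<Longrightarrow> dn X y z \<le> 3 * r \<Longrightarrow>
              \<exists>\<omega>. path_from X y x \<omega> \<and> real (length \<omega>) \<le> \<Lambda> r \<and> Av X z r y \<omega>"
  shows "\<exists>r. (\<forall>t\<le>length \<alpha>. \<exists>s\<in>S. dn X (pv X u \<alpha> t) s \<le> r) \<and>
             (real r)^2 \<le> max (9 * M^2) (M * (6 * real r + \<Lambda> r) / 2)"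
proof -
  have P: "path_from X u v \<alpha>" using g by (simp add: geo_def)
  have Sne: "S \<noteq> {}" using uS by blast
  let ?n = "length \<alpha>"
  let ?h = "\<lambda>t. dS X S (pv X u \<alpha> t)"
  obtain t0 where t0: "t0 \<le> ?n" and mx: "\<forall>t\<le>?n. ?h t \<le> ?h t0" using ex_max_nat_fun[of ?n ?h] by blast
  define r where "r = ?h t0"
  let ?z = "pv X u \<alpha> t0"
  have cv: "conn X u (pv X u \<alpha> t)" if "t \<le> ?n" for t using conn_pv[OF P that] .
  have cz: "conn X ?z u" using conn_sym[OF cv[OF t0]] .
  have near: "\<exists>s\<in>S. dn X (pv X u \<alpha> t) s = ?h t" for t using dS_ex[OF fS Sne] .
  have all_near: "\<forall>t\<le>?n. \<exists>s\<in>S. dn X (pv X u \<alpha> t) s \<le> r"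
  proof (intro allI impI)
    fix t assume t: "t \<le> ?n"
    obtain s0 where s0: "s0 \<in> S" "dn X (pv X u \<alpha> t) s0 = ?h t" using near by blast
    have "?h t \<le> r" using mx t r_def by blast
    then have "dn X (pv X u \<alpha> t) s0 \<le> r" using s0(2) by simp
    then show "\<exists>s\<in>S. dn X (pv X u \<alpha> t) s \<le> r" using s0(1) by blast
  qed
  have far: "\<forall>s\<in>S. r \<le> dn X s ?z"
  proof
    fix s assume s: "s \<in> S"
    have "r \<le> dn X ?z s" using dS_le[OF fS s] r_def by simp
    moreover have "conn X s ?z" using conn_trans[OF bspec[OF Sc s] cv[OF t0]] .
    ultimately show "r \<le> dn X s ?z" using dn_sym[of s ?z] by simp
  qed
  have dz: "dn X (pv X u \<alpha> t) ?z = (if t \<le> t0 then t0 - t else t - t0)" if "t \<le> ?n" for t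
    using geo_sub'[OF g that t0] by (auto split: if_splits)
  have "dn X u ?z = t0" using dz[of 0] by simp
  then have t0r: "r \<le> t0" using far uS by auto
  have nr: "t0 + r \<le> ?n"
  proof -
    have "r \<le> dn X v ?z" using far vS by blast
    moreover have "pv X u \<alpha> ?n = v" using path_from_pv_end[OF P] .
    ultimately show ?thesis using dz[of ?n] t0 by (cases "?n \<le> t0") auto
  qed
  define i1 where "i1 = t0 - 2 * r"
  define i2 where "i2 = min ?n (t0 + 2 * r)"
  have w1: "i1 + r \<le> t0" "t0 + r \<le> i2" "i2 \<le> ?n" "i1 \<le> i2" using t0r nr t0 by (auto simp: i1_def i2_def)
  let ?a = "pv X u \<alpha> i1" and ?b = "pv X u \<alpha> i2"
  obtain x where xS: "x \<in> S" and xd: "dn X ?a x = ?h i1" using near by blast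
  obtain y where yS: "y \<in> S" and yd: "dn X ?b y = ?h i2" using near by blast
  have hx: "?h i1 \<le> r" "?h i2 \<le> r" using mx w1 r_def by auto
  have caz: "conn X ?a ?z" "conn X ?b ?z" using conn_trans[OF conn_sym[OF cv] cv[OF t0]] w1 by auto
  have cax: "conn X ?a x" using conn_trans[OF conn_sym[OF cv] conn_sym[OF bspec[OF Sc xS]]] w1 by auto
  have cby: "conn X ?b y" using conn_trans[OF conn_sym[OF cv] conn_sym[OF bspec[OF Sc yS]]] w1 by auto
  have daz: "dn X ?a ?z = t0 - i1" using dz[of i1] w1 by auto
  have dbz: "dn X ?b ?z = i2 - t0" using dz[of i2] w1 by auto
  have dxz: "dn X x ?z \<le> 3 * r"
  proof -
    have "dn X x ?z \<le> dn X x ?a + dn X ?a ?z" using dn_tri[OF conn_sym[OF cax] caz(1)] .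
    moreover have "dn X x ?a = dn X ?a x" using dn_sym[OF cax] by simp
    moreover have "t0 - i1 \<le> 2 * r" by (simp add: i1_def)
    ultimately show ?thesis using xd hx daz by linarith
  qed
  have dyz: "dn X y ?z \<le> 3 * r"
  proof -
    have "dn X y ?z \<le> dn X y ?b + dn X ?b ?z" using dn_tri[OF conn_sym[OF cby] caz(2)] .
    moreover have "dn X y ?b = dn X ?b y" using dn_sym[OF cby] by simp
    moreover have "i2 - t0 \<le> 2 * r" by (simp add: i2_def)
    ultimately show ?thesis using yd hx dbz by linarith
  qed
  obtain \<omega> where \<omega>: "path_from X y x \<omega>" "real (length \<omega>) \<le> \<Lambda> r" "Av X ?z r y \<omega>"
    using RT[OF far cz xS yS dxz dyz] by blast
  obtain c1 where c1: "geo X ?b y c1" using dn_geo[OF cby] by blast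
  obtain c2 where c2: "geo X x ?a c2" using dn_geo[OF conn_sym[OF cax]] by blast
  have lc1: "length c1 = ?h i2" using c1 yd by (simp add: geo_def)
  have lc2: "length c2 = ?h i1" using c2 xd dn_sym[OF cax] by (simp add: geo_def)
  have Av1: "Av X ?z r ?b c1"
  proof (rule connector_Av[OF c1 caz(2)])
    show "r \<le> dn X y ?z" using far yS by blast
    show "2 * r \<le> dn X ?b ?z + dn X y ?z - length c1"
    proof (cases "i2 = t0 + 2 * r")
      case True
      have "r \<le> dn X y ?z" using far yS by blast
      then show ?thesis using True dbz lc1 hx by simp
    next
      case False
      then have "i2 = ?n" by (simp add: i2_def)
      then have "?b = v" using path_from_pv_end[OF P] by simp
      then have "?h i2 = 0" using dS_le[OF fS vS, of X v] dn_refl[of v] end_verts[OF P] by simp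
      moreover have "r \<le> dn X ?b ?z" using far vS \<open>?b = v\<close> by simp
      moreover have "r \<le> dn X y ?z" using far yS by blast
      ultimately show ?thesis using lc1 by simp
    qed
  qed
  have Av2: "Av X ?z r x c2"
  proof (rule connector_Av[OF c2 conn_trans[OF conn_sym[OF cax] caz(1)]])
    show "r \<le> dn X ?a ?z"
    proof (cases "i1 = 0")
      case True then show ?thesis using far uS by simp
    next
      case False then have "i1 = t0 - 2 * r" "t0 - i1 = 2 * r" using i1_def by auto
      then show ?thesis using daz by simp
    qed
    have "r \<le> dn X x ?z" using far xS by blast
    moreover have "?h i1 + r \<le> dn X ?a ?z"
    proof (cases "i1 = 0")
      case True
      then have "?h i1 = 0" using dS_le[OF fS uS, of X u] dn_refl[of u] pf_start[OF P] by simp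
      then show ?thesis using True far uS by simp
    next
      case False then have "t0 - i1 = 2 * r" using i1_def by auto
      then show ?thesis using daz hx by simp
    qed
    ultimately show "2 * r \<le> dn X x ?z + dn X ?a ?z - length c2" using lc2 by linarith
  qed
  have Pc1: "path_from X ?b y c1" using c1 by (simp add: geo_def)
  have Pc2: "path_from X x ?a c2" using c2 by (simp add: geo_def)
  define W where "W = c1 @ \<omega> @ c2"
  have PW: "path_from X ?b ?a W" unfolding W_def using path_from_append[OF Pc1 path_from_append[OF \<omega>(1) Pc2]] .
  have AW: "Av X ?z r ?b W" unfolding W_def
    using Av_append[OF Pc1 Av1 Av_append[OF \<omega>(1) \<omega>(3) Av2]] .
  have L: "(real r)^2 \<le> max (9 * M^2) (M * real (i2 - i1 + length W) / 2)"
    by (rule loopL[OF g t0 w1(1-3) PW]) (use AW in \<open>simp add: Av_def\<close>)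
  have "real (i2 - i1 + length W) \<le> 6 * real r + \<Lambda> r"
  proof -
    have "i2 - i1 \<le> 4 * r" by (simp add: i1_def i2_def)
    moreover have "length c1 \<le> r" "length c2 \<le> r" using lc1 lc2 hx by auto
    ultimately show ?thesis using \<omega>(2) unfolding W_def by simp
  qed
  then have "M * real (i2 - i1 + length W) / 2 \<le> M * (6 * real r + \<Lambda> r) / 2" using M1 by simp
  then have "(real r)^2 \<le> max (9 * M^2) (M * (6 * real r + \<Lambda> r) / 2)" using L by linarith
  then show ?thesis using all_near by blast
qed

end


definition vs :: "('v,'e,'f) cx \<Rightarrow> 'v \<Rightarrow> ('e \<times> bool) list \<Rightarrow> 'v set" where
  "vs X a c = (\<lambda>k. pv X a c k) ` {..length c}"

lemma vs_finite: "finite (vs X a c)" by (simp add: vs_def)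
lemma vs_I: "k \<le> length c \<Longrightarrow> pv X a c k \<in> vs X a c" by (simp add: vs_def)
lemma vs_E: "x \<in> vs X a c \<Longrightarrow> \<exists>k\<le>length c. x = pv X a c k" by (auto simp: vs_def)
lemma vs_start: "a \<in> vs X a c" using vs_I[of 0 c X a] by simp

lemma Av_S: "(\<forall>k\<le>length w. pv X y w k \<in> S) \<Longrightarrow> (\<forall>s\<in>S. conn X s z \<and> r \<le> dn X s z) \<Longrightarrow> Av X z r y w"
  by (simp add: Av_def)

context tc begin

lemma vs_end: "path_from X a b c \<Longrightarrow> b \<in> vs X a c"
  using vs_I[of "length c" c X a] path_from_pv_end[of X a b c] by simp

lemma vs_conn: assumes "path_from X a b c" "x \<in> vs X a c" shows "conn X a x"
proof -
  obtain k where "k \<le> length c" "x = pv X a c k" using vs_E[OF assms(2)] by blast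
  then show ?thesis using conn_pv[OF assms(1)] by simp
qed

lemma segment:
  assumes P: "path_from X a b c" and i: "i \<le> length c" and j: "j \<le> length c"
  shows "\<exists>w. path_from X (pv X a c i) (pv X a c j) w \<and> length w = (if i \<le> j then j - i else i - j)
            \<and> (\<forall>k\<le>length w. pv X (pv X a c i) w k \<in> vs X a c)"
proof -
  have seg: "\<exists>w. path_from X (pv X a c i) (pv X a c j) w \<and> length w = j - i
            \<and> (\<forall>k\<le>length w. pv X (pv X a c i) w k \<in> vs X a c)" if ij: "i \<le> j" "j \<le> length c" for i j
  proof -
    define w where "w = take (j - i) (drop i c)"
    have pw: "pv X (pv X a c i) w k = pv X a c (i + k)" if "k \<le> j - i" for k
      using that ij pv_take[of k "j - i" "drop i c" X "pv X a c i"] pv_drop[of i k c X a] by (simp add: w_def)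
    have "path_from X (pv X a c i) b (drop i c)" using path_from_drop[OF P] ij by simp
    from path_from_take[OF this, of "j - i"]
    have Pw: "path_from X (pv X a c i) (pv X a c j) w"
      using ij pv_drop[of i "j - i" c X a] by (simp add: w_def)
    have lw: "length w = j - i" using ij by (simp add: w_def)
    have "\<forall>k\<le>length w. pv X (pv X a c i) w k \<in> vs X a c"
      using pw lw ij by (auto intro!: vs_I)
    then show ?thesis using Pw lw by blast
  qed
  show ?thesis
  proof (cases "i \<le> j")
    case True then show ?thesis using seg[OF True j] by simp
  next
    case False
    then have ji: "j \<le> i" by simp
    obtain w where w: "path_from X (pv X a c j) (pv X a c i) w" "length w = i - j"
      "\<forall>k\<le>length w. pv X (pv X a c j) w k \<in> vs X a c" using seg[OF ji i] by blast
    have Pr: "path_from X (pv X a c i) (pv X a c j) (revp w)" using path_from_revp[OF w(1)] .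
    have "\<forall>k\<le>length (revp w). pv X (pv X a c i) (revp w) k \<in> vs X a c"
      using pv_revp[OF w(1)] w(3) by simp
    then show ?thesis using Pr w(2) False by auto
  qed
qed

lemma segment_geo:
  assumes g: "geo X a b c" and x: "x \<in> vs X a c" and y: "y \<in> vs X a c"
  shows "\<exists>w. path_from X y x w \<and> length w = dn X y x \<and> (\<forall>k\<le>length w. pv X y w k \<in> vs X a c)"
proof -
  have P: "path_from X a b c" using g by (simp add: geo_def)
  obtain i j where i: "i \<le> length c" "y = pv X a c i" and j: "j \<le> length c" "x = pv X a c j"
    using vs_E[OF x] vs_E[OF y] by blast
  obtain w where w: "path_from X (pv X a c i) (pv X a c j) w" "length w = (if i \<le> j then j - i else i - j)"
            "\<forall>k\<le>length w. pv X (pv X a c i) w k \<in> vs X a c" using segment[OF P i(1) j(1)] by blast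
  have "real (dn X y x) = \<bar>real i - real j\<bar>" using geo_sub'[OF g i(1) j(1)] i j by simp
  then have "length w = dn X y x" using w(2) by (auto split: if_splits)
  then show ?thesis using w i j by blast
qed

end

context hyp begin

lemma lemQ:
  assumes ga: "geo X c u \<alpha>" and gb: "geo X c w \<beta>" and gg: "geo X w u \<gamma>"
  shows "\<exists>r. (\<forall>t\<le>length \<alpha>. \<exists>s\<in>vs X c \<beta> \<union> vs X w \<gamma>. dn X (pv X c \<alpha> t) s \<le> r) \<and>
             (real r)^2 \<le> max (9 * M^2) (M * (6 * real r + (6 * real r + 2 * real (length \<gamma>))) / 2)"
proof (rule fatL[OF ga, where \<Lambda> = "\<lambda>r. 6 * real r + 2 * real (length \<gamma>)" and S = "vs X c \<beta> \<union> vs X w \<gamma>"])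
  let ?S = "vs X c \<beta> \<union> vs X w \<gamma>"
  have Pb: "path_from X c w \<beta>" using gb by (simp add: geo_def)
  have Pg: "path_from X w u \<gamma>" using gg by (simp add: geo_def)
  show "finite ?S" by (simp add: vs_finite)
  show "c \<in> ?S" using vs_start[of c X \<beta>] by simp
  show "u \<in> ?S" using vs_end[OF Pg] by blast
  have cw: "conn X c w" using Pb by (auto simp: conn_def)
  show Sc: "\<forall>s\<in>?S. conn X s c"
  proof
    fix s assume "s \<in> ?S"
    then show "conn X s c"
    proof
      assume "s \<in> vs X c \<beta>" then show ?thesis using conn_sym[OF vs_conn[OF Pb]] by blast
    next
      assume "s \<in> vs X w \<gamma>" then show ?thesis using conn_sym[OF conn_trans[OF cw vs_conn[OF Pg]]] by blast
    qed
  qed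
  fix z r x y
  assume far: "\<forall>s\<in>?S. r \<le> dn X s z" and cz: "conn X z c" and xS: "x \<in> ?S" and yS: "y \<in> ?S"
    and dx: "dn X x z \<le> 3 * r" and dy: "dn X y z \<le> 3 * r"
  have SZ: "\<forall>s\<in>?S. conn X s z \<and> r \<le> dn X s z"
  proof
    fix s assume s: "s \<in> ?S"
    have "conn X s z" using conn_trans[OF bspec[OF Sc s] conn_sym[OF cz]] .
    then show "conn X s z \<and> r \<le> dn X s z" using far s by blast
  qed
  have cxz: "conn X x z" "conn X y z" using bspec[OF SZ xS] bspec[OF SZ yS] by blast+
  have dxy: "dn X y x \<le> 6 * r"
    using dn_tri[OF cxz(2) conn_sym[OF cxz(1)]] dn_sym[OF cxz(1)] dx dy by linarith
  have wS: "w \<in> vs X c \<beta>" "w \<in> vs X w \<gamma>" using vs_end[OF Pb] vs_start[of w X \<gamma>] by simp_all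
  have cwx: "conn X w s" if "s \<in> ?S" for s
    using conn_trans[OF conn_sym[OF cw] conn_sym[OF bspec[OF Sc that]]] .
  have lg: "dn X w s \<le> length \<gamma>" if s: "s \<in> vs X w \<gamma>" for s
  proof -
    from vs_E[OF s] obtain k where k: "k \<le> length \<gamma>" and sk: "s = pv X w \<gamma> k" by (elim exE conjE)
    have "dn X w (pv X w \<gamma> k) = k" by (rule geo_vert(1)[OF gg k])
    then show "dn X w s \<le> length \<gamma>" using k sk by simp
  qed
  show "\<exists>\<omega>. path_from X y x \<omega> \<and> real (length \<omega>) \<le> 6 * real r + 2 * real (length \<gamma>) \<and> Av X z r y \<omega>"
  proof -
    consider "x \<in> vs X c \<beta> \<and> y \<in> vs X c \<beta>" | "x \<in> vs X w \<gamma> \<and> y \<in> vs X w \<gamma>"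
      | "y \<in> vs X c \<beta> \<and> x \<in> vs X w \<gamma>" | "x \<in> vs X c \<beta> \<and> y \<in> vs X w \<gamma>" using xS yS by blast
    then show ?thesis
    proof cases
      case 1
      obtain \<omega> where \<omega>: "path_from X y x \<omega>" "length \<omega> = dn X y x" "\<forall>k\<le>length \<omega>. pv X y \<omega> k \<in> vs X c \<beta>"
        using segment_geo[OF gb conjunct1[OF 1] conjunct2[OF 1]] by blast
      have "Av X z r y \<omega>" using Av_S[OF _ SZ] \<omega>(3) by blast
      moreover have "real (length \<omega>) \<le> 6 * real r + 2 * real (length \<gamma>)" using \<omega>(2) dxy by simp
      ultimately show ?thesis using \<omega>(1) by blast
    next
      case 2
      obtain \<omega> where \<omega>: "path_from X y x \<omega>" "length \<omega> = dn X y x" "\<forall>k\<le>length \<omega>. pv X y \<omega> k \<in> vs X w \<gamma>"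
        using segment_geo[OF gg conjunct1[OF 2] conjunct2[OF 2]] by blast
      have "Av X z r y \<omega>" using Av_S[OF _ SZ] \<omega>(3) by blast
      moreover have "real (length \<omega>) \<le> 6 * real r + 2 * real (length \<gamma>)" using \<omega>(2) dxy by simp
      ultimately show ?thesis using \<omega>(1) by blast
    next
      case 3
      obtain \<omega>1 where \<omega>1: "path_from X y w \<omega>1" "length \<omega>1 = dn X y w" "\<forall>k\<le>length \<omega>1. pv X y \<omega>1 k \<in> vs X c \<beta>"
        using segment_geo[OF gb wS(1) conjunct1[OF 3]] by blast
      obtain \<omega>2 where \<omega>2: "path_from X w x \<omega>2" "length \<omega>2 = dn X w x" "\<forall>k\<le>length \<omega>2. pv X w \<omega>2 k \<in> vs X w \<gamma>"
        using segment_geo[OF gg conjunct2[OF 3] wS(2)] by blast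
      have A1: "Av X z r y \<omega>1" using Av_S[OF _ SZ] \<omega>1(3) by blast
      have A2: "Av X z r w \<omega>2" using Av_S[OF _ SZ] \<omega>2(3) by blast
      have "dn X y w \<le> dn X y x + dn X x w"
        using dn_tri[OF conn_trans[OF cxz(2) conn_sym[OF cxz(1)]] conn_sym[OF cwx[OF xS]]] .
      moreover have "dn X x w = dn X w x" using dn_sym[OF cwx[OF xS]] by simp
      moreover have "dn X w x \<le> length \<gamma>" using lg 3 by blast
      ultimately have "length (\<omega>1 @ \<omega>2) \<le> 6 * r + 2 * length \<gamma>" using \<omega>1(2) \<omega>2(2) dxy by simp
      then show ?thesis using path_from_append[OF \<omega>1(1) \<omega>2(1)] Av_append[OF \<omega>1(1) A1 A2]
        by (intro exI[of _ "\<omega>1 @ \<omega>2"]) auto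
    next
      case 4
      obtain \<omega>1 where \<omega>1: "path_from X y w \<omega>1" "length \<omega>1 = dn X y w" "\<forall>k\<le>length \<omega>1. pv X y \<omega>1 k \<in> vs X w \<gamma>"
        using segment_geo[OF gg wS(2) conjunct2[OF 4]] by blast
      obtain \<omega>2 where \<omega>2: "path_from X w x \<omega>2" "length \<omega>2 = dn X w x" "\<forall>k\<le>length \<omega>2. pv X w \<omega>2 k \<in> vs X c \<beta>"
        using segment_geo[OF gb conjunct1[OF 4] wS(1)] by blast
      have A1: "Av X z r y \<omega>1" using Av_S[OF _ SZ] \<omega>1(3) by blast
      have A2: "Av X z r w \<omega>2" using Av_S[OF _ SZ] \<omega>2(3) by blast
      have "dn X w x \<le> dn X w y + dn X y x"
        using dn_tri[OF cwx[OF yS] conn_trans[OF cxz(2) conn_sym[OF cxz(1)]]] .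
      moreover have "dn X y w = dn X w y" using dn_sym[OF cwx[OF yS]] by simp
      moreover have "dn X w y \<le> length \<gamma>" using lg 4 by blast
      ultimately have "length (\<omega>1 @ \<omega>2) \<le> 6 * r + 2 * length \<gamma>" using \<omega>1(2) \<omega>2(2) dxy by simp
      then show ?thesis using path_from_append[OF \<omega>1(1) \<omega>2(1)] Av_append[OF \<omega>1(1) A1 A2]
        by (intro exI[of _ "\<omega>1 @ \<omega>2"]) auto
    qed
  qed
qed

end


lemma sq_bound: fixes x M L :: real
  assumes "x \<ge> 0" "M \<ge> 0" "x^2 \<le> max (9 * M^2) (M * (6 * x + (6 * x + 2 * L)) / 2)" "L \<ge> 0"
  shows "x \<le> 3 * M + sqrt (9 * M^2 + M * L)"
proof (cases "x^2 \<le> 9 * M^2")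
  case True
  moreover have "(3 * M)^2 = 9 * M^2" by (simp add: power2_eq_square)
  ultimately have "x^2 \<le> (3 * M)^2" by linarith
  then have "x \<le> 3 * M" by (rule power2_le_imp_le) (use assms(2) in simp)
  moreover have "0 \<le> sqrt (9 * M^2 + M * L)" using assms by simp
  ultimately show ?thesis by linarith
next
  case False
  have "x^2 \<le> 9 * M^2 \<or> x^2 \<le> M * (6 * x + (6 * x + 2 * L)) / 2" using assms(3) by (simp only: le_max_iff_disj)
  then have h: "x^2 \<le> M * (6 * x + (6 * x + 2 * L)) / 2" using False by blast
  have e1: "(x - 3 * M)^2 = x^2 - 6 * M * x + 9 * M^2" by (simp add: power2_eq_square algebra_simps)
  have e2: "M * (6 * x + (6 * x + 2 * L)) / 2 = 6 * M * x + M * L" by (simp add: algebra_simps)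
  have "(x - 3 * M)^2 \<le> 9 * M^2 + M * L" using h e1 e2 by linarith
  then have "x - 3 * M \<le> sqrt (9 * M^2 + M * L)" by (rule real_le_rsqrt)
  then show ?thesis by simp
qed

context tc begin

lemma Av_revp: assumes "path_from X x y p" "Av X z r x p" shows "Av X z r y (revp p)"
  unfolding Av_def
proof (intro allI impI)
  fix k assume k: "k \<le> length (revp p)"
  have "pv X y (revp p) k = pv X x p (length p - k)" using pv_revp[OF assms(1)] k by simp
  then show "conn X (pv X y (revp p) k) z \<and> r \<le> dn X (pv X y (revp p) k) z"
    using assms(2) unfolding Av_def by simp
qed


lemma vs_revp_sub: assumes "path_from X a b p" shows "vs X b (revp p) \<subseteq> vs X a p"
proof
  fix x assume "x \<in> vs X b (revp p)"
  from vs_E[OF this] obtain k where k: "k \<le> length (revp p)" and xk: "x = pv X b (revp p) k" by (elim exE conjE)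
  have "x = pv X a p (length p - k)" using pv_revp[OF assms] k xk by simp
  then show "x \<in> vs X a p" using vs_I[of "length p - k" p X a] by simp
qed

lemma vs_drop_sub: assumes "i \<le> length p" shows "vs X (pv X a p i) (drop i p) \<subseteq> vs X a p"
proof
  fix x assume "x \<in> vs X (pv X a p i) (drop i p)"
  from vs_E[OF this] obtain k where k: "k \<le> length (drop i p)" and xk: "x = pv X (pv X a p i) (drop i p) k" by (elim exE conjE)
  have "x = pv X a p (i + k)" using pv_drop[of i k p X a] k xk assms by simp
  then show "x \<in> vs X a p" using vs_I[of "i + k" p X a] k assms by simp
qed

lemma jump_Av:
  assumes g: "geo X s x J" and c: "conn X x z" and d: "length J + r \<le> dn X x z"
  shows "Av X z r s J"
  unfolding Av_def
proof (intro allI impI)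
  fix k assume k: "k \<le> length J"
  have P: "path_from X s x J" using g by (simp add: geo_def)
  let ?q = "pv X s J k"
  have cq: "conn X ?q x" using path_from_drop[OF P k] by (auto simp: conn_def)
  have cqz: "conn X ?q z" using conn_trans[OF cq c] .
  have "dn X x z \<le> dn X x ?q + dn X ?q z" using dn_tri[OF conn_sym[OF cq] cqz] .
  moreover have "dn X x ?q = dn X ?q x" using dn_sym[OF cq] by simp
  moreover have "dn X ?q x = length J - k" using geo_vert(2)[OF g k] .
  ultimately show "conn X ?q z \<and> r \<le> dn X ?q z" using cqz d by linarith
qed

lemma vs_geo_dist: assumes g: "geo X a b p" and x: "x \<in> vs X a p"
  shows "dn X x b \<le> length p" "dn X a x \<le> length p"
proof -
  from vs_E[OF x] obtain k where k: "k \<le> length p" and xk: "x = pv X a p k" by (elim exE conjE)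
  show "dn X x b \<le> length p" using geo_vert(2)[OF g k] xk by simp
  show "dn X a x \<le> length p" using geo_vert(1)[OF g k] xk k by simp
qed

end



context hyp begin

definition Dr :: "nat \<Rightarrow> real" where
  "Dr r = 3 * M + sqrt (9 * M^2 + 6 * M * real r)"

lemma Dr_nonneg: "0 \<le> Dr r"
  using M1 by (simp add: Dr_def)

lemma mixed_route:
  assumes gB: "geo X b c B" and gC: "geo X c a C"
    and uC: "u' \<in> vs X c C" and wB: "w' \<in> vs X b B"
    and dzu: "dn X u' z \<le> 3 * r" and duw: "dn X w' u' \<le> 6 * r"
    and far: "\<forall>s \<in> vs X b B \<union> vs X c C. conn X s z \<and> r \<le> dn X s z"
  shows "\<exists>\<omega>. path_from X w' u' \<omega> \<and> real (length \<omega>) \<le> 18 * real r + 4 * Dr r + 4 \<and> Av X z r w' \<omega>"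
proof -
  let ?S = "vs X b B \<union> vs X c C"
  have PB: "path_from X b c B" using gB by (simp add: geo_def)
  have PC: "path_from X c a C" using gC by (simp add: geo_def)
  from vs_E[OF uC] obtain j where j: "j \<le> length C" and uj: "u' = pv X c C j" by (elim exE conjE)
  from vs_E[OF wB] obtain i where i: "i \<le> length B" and wi: "w' = pv X b B i" by (elim exE conjE)
  have cuz: "conn X u' z" using far uC by blast
  have cwz: "conn X w' z" using far wB by blast
  have cwu: "conn X w' u'" using conn_trans[OF cwz conn_sym[OF cuz]] .
  have ga: "geo X c u' (take j C)" using geo_take[OF gC j] uj by simp
  have gb: "geo X c w' (revp (drop i B))" using geo_revp[OF geo_drop[OF gB i]] wi by simp
  obtain \<gamma> where gg: "geo X w' u' \<gamma>" using dn_geo[OF cwu] by blast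
  have lg: "length \<gamma> = dn X w' u'" using gg by (simp add: geo_def)
  obtain r' where cov: "\<forall>t\<le>length (take j C). \<exists>s\<in>vs X c (revp (drop i B)) \<union> vs X w' \<gamma>. dn X (pv X c (take j C) t) s \<le> r'"
    and r'b: "(real r')^2 \<le> max (9 * M^2) (M * (6 * real r' + (6 * real r' + 2 * real (length \<gamma>))) / 2)"
    using lemQ[OF ga gb gg] by blast
  have "real r' \<le> 3 * M + sqrt (9 * M^2 + M * real (length \<gamma>))"
    by (rule sq_bound) (use r'b M1 in auto)
  also have "\<dots> \<le> Dr r"
  proof -
    have "M * real (length \<gamma>) \<le> M * (6 * real r)" using lg duw M1 by (intro mult_left_mono) auto
    then show ?thesis unfolding Dr_def by simp
  qed
  finally have r'D: "real r' \<le> Dr r" .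
  define K where "K = nat \<lceil>6 * real r + Dr r\<rceil> + 1"
  have K1: "6 * real r + Dr r + 1 \<le> real K" "real K \<le> 6 * real r + Dr r + 2"
  proof -
    have nn: "0 \<le> 6 * real r + Dr r" using Dr_nonneg by simp
    then have "real (nat \<lceil>6 * real r + Dr r\<rceil>) = of_int \<lceil>6 * real r + Dr r\<rceil>" by simp
    moreover have "6 * real r + Dr r \<le> of_int \<lceil>6 * real r + Dr r\<rceil>" by (rule le_of_int_ceiling)
    moreover have "of_int \<lceil>6 * real r + Dr r\<rceil> \<le> 6 * real r + Dr r + 1" using ceiling_correct[of "6 * real r + Dr r"] by linarith
    moreover have "real K = real (nat \<lceil>6 * real r + Dr r\<rceil>) + 1" by (simp add: K_def)
    ultimately show "6 * real r + Dr r + 1 \<le> real K" "real K \<le> 6 * real r + Dr r + 2" by linarith+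
  qed
  have cS: "conn X s z \<and> r \<le> dn X s z" if "s \<in> ?S" for s using far that by blast
  show ?thesis
  proof (cases "K \<le> j")
    case True
    define t where "t = j - K"
    have tj: "t \<le> length (take j C)" using j by (simp add: t_def)
    let ?x = "pv X c C t"
    have xt: "pv X c (take j C) t = ?x" using pv_take[of t j C X c] j by (simp add: t_def)
    have dxu: "dn X ?x u' = K" using geo_sub[OF gC, of t j] j True uj by (simp add: t_def)
    have xC: "?x \<in> vs X c C" using vs_I[of t C X c] j by (simp add: t_def)
    have cxz: "conn X ?x z" using cS xC by blast
    obtain s where sS: "s \<in> vs X c (revp (drop i B)) \<union> vs X w' \<gamma>" and dxs: "dn X ?x s \<le> r'"
      using cov tj xt by force
    have sB: "s \<in> vs X b B"
    proof (rule ccontr)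
      assume "s \<notin> vs X b B"
      have sub: "vs X c (revp (drop i B)) \<subseteq> vs X b B"
        using vs_revp_sub[OF path_from_drop[OF PB i]] vs_drop_sub[OF i, of b] wi by auto
      then have sg: "s \<in> vs X w' \<gamma>" using sS \<open>s \<notin> vs X b B\<close> by blast
      have Pg: "path_from X w' u' \<gamma>" using gg by (simp add: geo_def)
      have dsu: "dn X s u' \<le> length \<gamma>" using vs_geo_dist(1)[OF gg sg] .
      have csz: "conn X s z" using conn_trans[OF conn_sym[OF vs_conn[OF Pg sg]] cwz] .
      have cxs: "conn X ?x s" using conn_trans[OF cxz conn_sym[OF csz]] .
      have csu: "conn X s u'" using conn_trans[OF csz conn_sym[OF cuz]] .
      have "dn X ?x u' \<le> dn X ?x s + dn X s u'" using dn_tri[OF cxs csu] .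
      then have "real K \<le> real r' + 6 * real r" using dxu dxs dsu lg duw by linarith
      then show False using K1 r'D by linarith
    qed
    have csz: "conn X s z" using cS sB by blast
    have cxs: "conn X ?x s" using conn_trans[OF cxz conn_sym[OF csz]] .
    obtain J where gJ: "geo X s ?x J" using dn_geo[OF conn_sym[OF cxs]] by blast
    have lJ: "length J = dn X ?x s" using gJ dn_sym[OF cxs] by (simp add: geo_def)
    obtain w1 where w1: "path_from X w' s w1" "length w1 = dn X w' s" "\<forall>k\<le>length w1. pv X w' w1 k \<in> vs X b B"
      using segment_geo[OF gB sB wB] by blast
    obtain w3 where w3: "path_from X ?x u' w3" "length w3 = dn X ?x u'" "\<forall>k\<le>length w3. pv X ?x w3 k \<in> vs X c C"
      using segment_geo[OF gC uC xC] by blast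
    have PJ: "path_from X s ?x J" using gJ by (simp add: geo_def)
    have A1: "Av X z r w' w1" by (rule Av_S[OF w1(3)]) (use cS in blast)
    have A3: "Av X z r ?x w3" by (rule Av_S[OF w3(3)]) (use cS in blast)
    have dxz: "real K \<le> real (dn X ?x z) + 3 * real r"
    proof -
      have "dn X ?x u' \<le> dn X ?x z + dn X z u'" using dn_tri[OF cxz conn_sym[OF cuz]] .
      moreover have "dn X z u' = dn X u' z" using dn_sym[OF conn_sym[OF cuz]] .
      ultimately show ?thesis using dxu dzu by linarith
    qed
    have AJ: "Av X z r s J"
    proof (rule jump_Av[OF gJ cxz])
      have "real (length J) \<le> Dr r" using lJ dxs r'D by linarith
      then show "length J + r \<le> dn X ?x z" using dxz K1 by linarith
    qed
    have cws: "conn X w' s" using conn_trans[OF cwz conn_sym[OF csz]] .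
    have cus: "conn X u' s" using conn_trans[OF cuz conn_sym[OF csz]] .
    have cux: "conn X u' ?x" using conn_trans[OF cuz conn_sym[OF cxz]] .
    have t1: "dn X w' s \<le> dn X w' u' + dn X u' s" using dn_tri[OF cwu cus] .
    have t2: "dn X u' s \<le> dn X u' ?x + dn X ?x s" using dn_tri[OF cux cxs] .
    have dws: "dn X w' s \<le> dn X w' u' + dn X u' ?x + dn X ?x s" using t1 t2 by linarith
    have "dn X u' ?x = dn X ?x u'" using dn_sym[OF conn_trans[OF cuz conn_sym[OF cxz]]] .
    then have "real (length (w1 @ J @ w3)) \<le> 18 * real r + 4 * Dr r + 4"
      using w1(2) lJ w3(2) dws dxu duw dxs r'D K1 by simp
    moreover have "path_from X w' u' (w1 @ J @ w3)" using path_from_append[OF w1(1) path_from_append[OF PJ w3(1)]] .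
    moreover have "Av X z r w' (w1 @ J @ w3)" using Av_append[OF w1(1) A1 Av_append[OF PJ AJ A3]] .
    ultimately show ?thesis by blast
  next
    case False
    have cB: "c \<in> vs X b B" using vs_end[OF PB] .
    have cC: "c \<in> vs X c C" using vs_start[of c X C] by simp
    obtain w1 where w1: "path_from X w' c w1" "length w1 = dn X w' c" "\<forall>k\<le>length w1. pv X w' w1 k \<in> vs X b B"
      using segment_geo[OF gB cB wB] by blast
    obtain w2 where w2: "path_from X c u' w2" "length w2 = dn X c u'" "\<forall>k\<le>length w2. pv X c w2 k \<in> vs X c C"
      using segment_geo[OF gC uC cC] by blast
    have A1: "Av X z r w' w1" by (rule Av_S[OF w1(3)]) (use cS in blast)
    have A2: "Av X z r c w2" by (rule Av_S[OF w2(3)]) (use cS in blast)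
    have dcu: "dn X c u' = j" using geo_vert(1)[OF gC j] uj by simp
    have ccz: "conn X c z" using cS cC by blast
    have "dn X w' c \<le> dn X w' u' + dn X u' c" using dn_tri[OF cwu conn_trans[OF cuz conn_sym[OF ccz]]] .
    moreover have "dn X u' c = dn X c u'" using dn_sym[OF conn_trans[OF cuz conn_sym[OF ccz]]] .
    ultimately have "dn X w' c \<le> dn X w' u' + j" using dcu by simp
    then have "real (dn X w' c) \<le> real (dn X w' u') + real j" by simp
    moreover have "real (dn X w' u') \<le> 6 * real r" using duw by simp
    moreover have "real j < real K" using False by simp
    moreover have "real (length (w1 @ w2)) = real (dn X w' c) + real j" using w1(2) w2(2) dcu by simp
    ultimately have "real (length (w1 @ w2)) \<le> 18 * real r + 4 * Dr r + 4"
      using K1 Dr_nonneg[of r] by linarith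
    moreover have "path_from X w' u' (w1 @ w2)" using path_from_append[OF w1(1) w2(1)] .
    moreover have "Av X z r w' (w1 @ w2)" using Av_append[OF w1(1) A1 A2] .
    ultimately show ?thesis by blast
  qed
qed

end


lemma num_bound: fixes r M :: real
  assumes r0: "0 \<le> r" and M1: "1 \<le> M"
    and h: "r^2 \<le> max (9 * M^2) (M * (6 * r + (18 * r + 4 * (3 * M + sqrt (9 * M^2 + 6 * M * r)) + 4)) / 2)"
  shows "r < 15 * M"
proof (rule ccontr)
  assume "\<not> r < 15 * M"
  then have r15: "15 * M \<le> r" by simp
  have sq: "sqrt (9 * M^2 + 6 * M * r) \<le> 3 * M + r"
  proof (rule real_le_lsqrt)
    show "0 \<le> 3 * M + r" using r0 M1 by simp
    show "9 * M^2 + 6 * M * r \<le> (3 * M + r)^2" by (simp add: power2_eq_square algebra_simps)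
  qed
  have a: "r * r \<ge> 15 * M * r" using r15 r0 by (simp add: mult_right_mono)
  have b: "15 * M * r \<ge> 15 * M * (15 * M)" using r15 M1 by (intro mult_left_mono) auto
  have rr: "r^2 = r * r" by (simp add: power2_eq_square)
  have MM: "1 \<le> M * M" using M1 by (metis mult_mono' mult_1 zero_le_one)
  have "r * r > 9 * (M * M)" using a b MM by linarith
  then have "r^2 > 9 * M^2" by (simp add: power2_eq_square)
  then have h2: "r^2 \<le> M * (6 * r + (18 * r + 4 * (3 * M + sqrt (9 * M^2 + 6 * M * r)) + 4)) / 2"
    using h by (simp add: le_max_iff_disj)
  have "M * (6 * r + (18 * r + 4 * (3 * M + sqrt (9 * M^2 + 6 * M * r)) + 4)) / 2
      \<le> M * (6 * r + (18 * r + 4 * (3 * M + (3 * M + r)) + 4)) / 2"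
    using sq M1 by (intro divide_right_mono mult_left_mono) auto
  also have "\<dots> = 14 * M * r + 12 * M * M + 2 * M" by (simp add: algebra_simps)
  finally have "r * r \<le> 14 * M * r + 12 * M * M + 2 * M" using h2 rr by linarith
  moreover have "2 * M \<le> 2 * M * M" using M1 by simp
  moreover have "r * r - 14 * M * r \<ge> 15 * M * M"
  proof -
    have "r * r - 14 * M * r = r * (r - 14 * M)" by (simp add: algebra_simps)
    also have "\<dots> \<ge> (15 * M) * M" using r15 M1 by (intro mult_mono) auto
    finally show ?thesis by simp
  qed
  ultimately show False using MM by linarith
qed

context hyp begin

lemma tri_vertex:
  assumes gA: "geo X a b A" and gB: "geo X b c B" and gC: "geo X c a C"
  shows "\<exists>r. real r < 15 * M \<and> (\<forall>t\<le>length A. \<exists>s\<in>vs X b B \<union> vs X c C. dn X (pv X a A t) s \<le> r)"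
proof -
  let ?S = "vs X b B \<union> vs X c C"
  have PA: "path_from X a b A" using gA by (simp add: geo_def)
  have PB: "path_from X b c B" using gB by (simp add: geo_def)
  have PC: "path_from X c a C" using gC by (simp add: geo_def)
  have cab: "conn X a b" using PA by (auto simp: conn_def)
  have cca: "conn X c a" using PC by (auto simp: conn_def)
  have "\<exists>r. (\<forall>t\<le>length A. \<exists>s\<in>?S. dn X (pv X a A t) s \<le> r) \<and>
             (real r)^2 \<le> max (9 * M^2) (M * (6 * real r + (\<lambda>r. 18 * real r + 4 * Dr r + 4) r) / 2)"
  proof (rule fatL[OF gA, where S = ?S and \<Lambda> = "\<lambda>r. 18 * real r + 4 * Dr r + 4"])
    show "finite ?S" by (simp add: vs_finite)
    show "a \<in> ?S" using vs_end[OF PC] by blast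
    show "b \<in> ?S" using vs_start[of b X B] by simp
    show Sc: "\<forall>s\<in>?S. conn X s a"
    proof
      fix s assume "s \<in> ?S"
      then show "conn X s a"
      proof
        assume "s \<in> vs X b B"
        then show ?thesis using conn_sym[OF conn_trans[OF cab vs_conn[OF PB]]] by blast
      next
        assume "s \<in> vs X c C"
        then show ?thesis using conn_sym[OF conn_trans[OF conn_sym[OF cca] vs_conn[OF PC]]] by blast
      qed
    qed
    fix z r x y
    assume far: "\<forall>s\<in>?S. r \<le> dn X s z" and cz: "conn X z a" and xS: "x \<in> ?S" and yS: "y \<in> ?S"
      and dx: "dn X x z \<le> 3 * r" and dy: "dn X y z \<le> 3 * r"
    have SZ: "\<forall>s\<in>?S. conn X s z \<and> r \<le> dn X s z"
    proof
      fix s assume s: "s \<in> ?S"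
      have "conn X s z" using conn_trans[OF bspec[OF Sc s] conn_sym[OF cz]] .
      then show "conn X s z \<and> r \<le> dn X s z" using far s by blast
    qed
    have cxz: "conn X x z" "conn X y z" using bspec[OF SZ xS] bspec[OF SZ yS] by blast+
    have dxy: "dn X y x \<le> 6 * r"
      using dn_tri[OF cxz(2) conn_sym[OF cxz(1)]] dn_sym[OF cxz(1)] dx dy by linarith
    have dyx: "dn X x y \<le> 6 * r" using dxy dn_sym[OF conn_trans[OF cxz(2) conn_sym[OF cxz(1)]]] by simp
    have L6: "6 * real r \<le> 18 * real r + 4 * Dr r + 4" using Dr_nonneg[of r] by simp
    show "\<exists>\<omega>. path_from X y x \<omega> \<and> real (length \<omega>) \<le> (\<lambda>r. 18 * real r + 4 * Dr r + 4) r \<and> Av X z r y \<omega>"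
    proof -
      consider "x \<in> vs X b B \<and> y \<in> vs X b B" | "x \<in> vs X c C \<and> y \<in> vs X c C"
        | "y \<in> vs X b B \<and> x \<in> vs X c C" | "x \<in> vs X b B \<and> y \<in> vs X c C" using xS yS by blast
      then show ?thesis
      proof cases
        case 1
        obtain \<omega> where \<omega>: "path_from X y x \<omega>" "length \<omega> = dn X y x" "\<forall>k\<le>length \<omega>. pv X y \<omega> k \<in> vs X b B"
          using segment_geo[OF gB conjunct1[OF 1] conjunct2[OF 1]] by blast
        have "Av X z r y \<omega>" by (rule Av_S[OF _]) (use \<omega>(3) SZ in blast)+
        moreover have "real (length \<omega>) \<le> 18 * real r + 4 * Dr r + 4" using \<omega>(2) dxy L6 by simp
        ultimately show ?thesis using \<omega>(1) by auto
      next
        case 2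
        obtain \<omega> where \<omega>: "path_from X y x \<omega>" "length \<omega> = dn X y x" "\<forall>k\<le>length \<omega>. pv X y \<omega> k \<in> vs X c C"
          using segment_geo[OF gC conjunct1[OF 2] conjunct2[OF 2]] by blast
        have "Av X z r y \<omega>" by (rule Av_S[OF _]) (use \<omega>(3) SZ in blast)+
        moreover have "real (length \<omega>) \<le> 18 * real r + 4 * Dr r + 4" using \<omega>(2) dxy L6 by simp
        ultimately show ?thesis using \<omega>(1) by auto
      next
        case 3
        have "\<exists>\<omega>. path_from X y x \<omega> \<and> real (length \<omega>) \<le> 18 * real r + 4 * Dr r + 4 \<and> Av X z r y \<omega>"
          by (rule mixed_route[OF gB gC conjunct2[OF 3] conjunct1[OF 3] dx dxy SZ])
        then show ?thesis by simp
      next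
        case 4
        obtain \<omega> where \<omega>: "path_from X x y \<omega>" "real (length \<omega>) \<le> 18 * real r + 4 * Dr r + 4" "Av X z r x \<omega>"
          using mixed_route[OF gB gC conjunct2[OF 4] conjunct1[OF 4] dy dyx SZ] by blast
        have "path_from X y x (revp \<omega>)" using path_from_revp[OF \<omega>(1)] .
        moreover have "Av X z r y (revp \<omega>)" using Av_revp[OF \<omega>(1) \<omega>(3)] .
        ultimately show ?thesis using \<omega>(2) by auto
      qed
    qed
  qed
  then obtain r where cov: "\<forall>t\<le>length A. \<exists>s\<in>?S. dn X (pv X a A t) s \<le> r"
    and rb: "(real r)^2 \<le> max (9 * M^2) (M * (6 * real r + (18 * real r + 4 * Dr r + 4)) / 2)" by auto
  have "real r < 15 * M" by (rule num_bound) (use rb M1 in \<open>auto simp: Dr_def\<close>)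
  then show ?thesis using cov by blast
qed

end


lemma pdist_le_anchor:
  assumes "(p, o1) \<in> anchors X x" "(q, o2) \<in> anchors X y"
  shows "pdist X x y \<le> ereal o1 + gdist X p q + ereal o2"
proof -
  have "Inf {ereal o1 + gdist X a b + ereal o2 | a o1 b o2. (a, o1) \<in> anchors X x \<and> (b, o2) \<in> anchors X y}
      \<le> ereal o1 + gdist X p q + ereal o2"
    by (rule Inf_lower) (use assms in blast)
  then show ?thesis unfolding pdist_def by (rule min.coboundedI2)
qed

context tc begin

lemma vs_path_pts: assumes "s \<in> vs X b B" shows "Vx s \<in> path_pts X b B"
proof -
  from vs_E[OF assms] obtain k where k: "k \<le> length B" and sk: "s = pv X b B k" by (elim exE conjE)
  show ?thesis
  proof (cases k)
    case 0 then show ?thesis using sk by (simp add: path_pts_def)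
  next
    case (Suc j)
    then have "s = dtgt X (B ! j)" "B ! j \<in> set B" using sk k by (auto simp: pvSuc)
    then show ?thesis unfolding path_pts_def by blast
  qed
qed

lemma path_pts_cases:
  assumes P: "path_from X a b A" and x: "x \<in> path_pts X a A"
  shows "(\<exists>q\<in>vs X a A. x = Vx q) \<or> (\<exists>q\<in>vs X a A. \<exists>t. (q, t) \<in> anchors X x \<and> t \<le> 1 \<and> 0 \<le> t)"
proof -
  have dv: "dsrc X d \<in> vs X a A \<and> dtgt X d \<in> vs X a A" if "d \<in> set A" for d
  proof -
    from that obtain k where k: "k < length A" and dk: "d = A ! k" by (auto simp: in_set_conv_nth)
    have "dsrc X d = pv X a A k" using path_from_src[OF P k] dk by simp
    moreover have "dtgt X d = pv X a A (Suc k)" using path_from_tgt[OF P k] dk by simp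
    ultimately show ?thesis using vs_I[of k A X a] vs_I[of "Suc k" A X a] k by simp
  qed
  from x consider "x = Vx a" | d where "d \<in> set A" "x = Vx (dsrc X d)" | d where "d \<in> set A" "x = Vx (dtgt X d)"
    | d t where "d \<in> set A" "x = Ip (fst d) t" "0 < t" "t < 1"
    unfolding path_pts_def by blast
  then show ?thesis
  proof cases
    case 1 then show ?thesis using vs_start[of a X A] by blast
  next
    case 2 then show ?thesis using dv by blast
  next
    case 3 then show ?thesis using dv by blast
  next
    case (4 d t)
    have "fst (ends X (fst d)) = (if snd d then dsrc X d else dtgt X d)" by (simp add: dsrc_def dtgt_def)
    then have "fst (ends X (fst d)) \<in> vs X a A" using dv[OF 4(1)] by (auto split: if_splits)
    moreover have "(fst (ends X (fst d)), t) \<in> anchors X x" using 4 by (simp add: anchors_def)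
    ultimately have "\<exists>q\<in>vs X a A. \<exists>t'. (q, t') \<in> anchors X x \<and> t' \<le> 1 \<and> 0 \<le> t'"
      using 4(3,4) by (intro bexI[of _ "fst (ends X (fst d))"] exI[of _ t]) auto
    then show ?thesis by blast
  qed
qed

end

context hyp begin

lemma side_thin:
  assumes gA: "geo X a b A" and gB: "geo X b c B" and gC: "geo X c a C"
  shows "\<forall>x\<in>path_pts X a A. \<exists>y\<in>path_pts X b B \<union> path_pts X c C. pdist X x y \<le> ereal (1 + 15 * M)"
proof
  fix x assume x: "x \<in> path_pts X a A"
  have PA: "path_from X a b A" using gA by (simp add: geo_def)
  have PB: "path_from X b c B" using gB by (simp add: geo_def)
  have PC: "path_from X c a C" using gC by (simp add: geo_def)
  obtain r where r15: "real r < 15 * M" and cov: "\<forall>t\<le>length A. \<exists>s\<in>vs X b B \<union> vs X c C. dn X (pv X a A t) s \<le> r"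
    using tri_vertex[OF gA gB gC] by blast
  have near: "\<exists>s. Vx s \<in> path_pts X b B \<union> path_pts X c C \<and> gdist X q s \<le> ereal (real r)" if q: "q \<in> vs X a A" for q
  proof -
    from vs_E[OF q] obtain k where k: "k \<le> length A" and qk: "q = pv X a A k" by (elim exE conjE)
    obtain s where sS: "s \<in> vs X b B \<union> vs X c C" and ds: "dn X q s \<le> r" using cov k qk by blast
    have cq: "conn X a q" using vs_conn[OF PA q] .
    have cs: "conn X a s"
    proof (cases "s \<in> vs X b B")
      case True then show ?thesis using conn_trans[OF _ vs_conn[OF PB True]] PA by (auto simp: conn_def)
    next
      case False then have "s \<in> vs X c C" using sS by blast
      then show ?thesis using conn_trans[OF conn_sym[OF _] vs_conn[OF PC]] PC by (auto simp: conn_def)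
    qed
    have "gdist X q s = ereal (real (dn X q s))" using gdist_conn[OF conn_trans[OF conn_sym[OF cq] cs]] .
    moreover have "Vx s \<in> path_pts X b B \<union> path_pts X c C" using sS vs_path_pts by blast
    ultimately show ?thesis using ds by auto
  qed
  have M0: "0 \<le> M" using M1 by simp
  from path_pts_cases[OF PA x] show "\<exists>y\<in>path_pts X b B \<union> path_pts X c C. pdist X x y \<le> ereal (1 + 15 * M)"
  proof (elim disjE bexE exE conjE)
    fix q assume q: "q \<in> vs X a A" and xq: "x = Vx q"
    obtain s where s: "Vx s \<in> path_pts X b B \<union> path_pts X c C" "gdist X q s \<le> ereal (real r)" using near[OF q] by blast
    have "pdist X x (Vx s) \<le> ereal 0 + gdist X q s + ereal 0"
      by (rule pdist_le_anchor) (simp_all add: anchors_def xq)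
    also have "\<dots> \<le> ereal (real r)" using s(2) by simp
    also have "\<dots> \<le> ereal (1 + 15 * M)" using r15 by simp
    finally show ?thesis using s(1) by blast
  next
    fix q t assume q: "q \<in> vs X a A" and an: "(q, t) \<in> anchors X x" and t1: "t \<le> 1" and t0: "0 \<le> t"
    obtain s where s: "Vx s \<in> path_pts X b B \<union> path_pts X c C" "gdist X q s \<le> ereal (real r)" using near[OF q] by blast
    have "pdist X x (Vx s) \<le> ereal t + gdist X q s + ereal 0"
      by (rule pdist_le_anchor[OF an]) (simp add: anchors_def)
    also have "\<dots> \<le> ereal t + ereal (real r) + ereal 0" using s(2) by (intro add_mono) auto
    also have "\<dots> = ereal (t + real r)" by simp
    also have "\<dots> \<le> ereal (1 + 15 * M)" using r15 t1 by simp
    finally show ?thesis using s(1) by blast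
  qed
qed

end

theorem theorem4p7:
  fixes X :: "('v,'e,'f) cx" and N :: nat and \<kappa> :: real
  assumes "two_complex X"
    and "0 < N"
    and "\<forall>f\<in>faces X. length (bdry X f) \<le> N"
    and "\<kappa> > 1 / real N"
    and "\<forall>\<gamma>. is_loop X \<gamma> \<longrightarrow> area X \<gamma> \<ge> ereal (18 * \<kappa>^2 * (real N)^2)
            \<longrightarrow> area X \<gamma> \<le> ereal (\<kappa> * real (length \<gamma>))"
  shows "\<forall>a b c pab pbc pca. geodesic_triangle X a b c pab pbc pca \<longrightarrow>
            thin_triangle X (120 * \<kappa>^2 * (real N)^3) a b c pab pbc pca"
proof (intro allI impI)
  fix a b c pab pbc pca
  assume T: "geodesic_triangle X a b c pab pbc pca"
  let ?M = "\<kappa> * (real N)^2"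
  have N1: "1 \<le> real N" using assms(2) by simp
  have kN: "1 < \<kappa> * real N" using assms(4) assms(2) by (simp add: field_simps)
  have "0 < 1 / real N" using assms(2) by simp
  then have k0: "0 < \<kappa>" using assms(4) by linarith
  have M1: "1 \<le> ?M"
  proof -
    have "\<kappa> * real N \<le> \<kappa> * real N * real N" using k0 N1 kN by simp
    then show ?thesis using kN by (simp add: power2_eq_square mult.assoc)
  qed
  interpret tc X by unfold_locales (rule assms(1))
  interpret H: hyp X ?M
  proof unfold_locales
    show "1 \<le> ?M" by (rule M1)
    fix f g \<gamma> assume "lip X f" "lip X g" "is_loop X \<gamma>"
    then show "\<bar>Ic X f g \<gamma>\<bar> \<le> max (9 * ?M^2) (?M * real (length \<gamma>) / 2)"
      using key_bound[OF assms(1) assms(2) assms(3) assms(5)] by blast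
  qed
  have g: "geo X a b pab" "geo X b c pbc" "geo X c a pca"
    using T by (auto simp: geodesic_triangle_def geodesic_geo)
  have dl: "1 + 15 * ?M \<le> 120 * \<kappa>^2 * (real N)^3"
  proof -
    have "?M * 1 \<le> ?M * (\<kappa> * real N)" using kN M1 by (intro mult_left_mono) auto
    also have "\<dots> = \<kappa>^2 * (real N)^3" by (simp add: power2_eq_square power3_eq_cube algebra_simps)
    finally have "?M \<le> \<kappa>^2 * (real N)^3" by simp
    then show ?thesis using M1 by linarith
  qed
  have mono: "\<forall>x\<in>P. \<exists>y\<in>Q. pdist X x y \<le> ereal (120 * \<kappa>^2 * (real N)^3)"
    if HPQ: "\<forall>x\<in>P. \<exists>y\<in>Q. pdist X x y \<le> ereal (1 + 15 * ?M)" for P Q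
  proof
    fix x assume "x \<in> P"
    then obtain y where "y \<in> Q" "pdist X x y \<le> ereal (1 + 15 * ?M)" using HPQ by blast
    moreover have "ereal (1 + 15 * ?M) \<le> ereal (120 * \<kappa>^2 * (real N)^3)" using dl by simp
    ultimately show "\<exists>y\<in>Q. pdist X x y \<le> ereal (120 * \<kappa>^2 * (real N)^3)" by (meson order_trans)
  qed
  show "thin_triangle X (120 * \<kappa>^2 * (real N)^3) a b c pab pbc pca"
    unfolding thin_triangle_def
    using mono[OF H.side_thin[OF g(1) g(2) g(3)]] mono[OF H.side_thin[OF g(2) g(3) g(1)]]
      mono[OF H.side_thin[OF g(3) g(1) g(2)]] by blast
qed


end
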